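(* There exists a function $f:\mathbb{N}^3\to\mathbb{N}$ such that $\mathrm{Sep}(G,k)\le f(n,m,k)$ for every $k\in\mathbb{N}$ and every finite graph $G$ for which $\lceil G\rceil$ can be linearly ordered by an MSO-formula of the form $\varphi(x,y;\bar P)$ with quantifier-rank $\mathrm{qr}(\varphi)\le m$ and parameters $\bar P=\langle P_0,\dots,P_{n-1}\rangle$ (i.e. $\{(a,b):\lceil G\rceil\models\varphi(a,b;\bar P)\}$ is a linear order on the universe of $\lceil G\rceil$). Moreover, there is a computable function $g$ such that $f(n,m,k)\le \exp_{g(n,m)}(k)$ for all $n,m,k$.
   Context: Graphs are finite, simple, loop-free, undirected. For a graph $G=\langle V,E\rangle$, $\lfloor G\rfloor=\langle V,\mathrm{edg}\rangle$ is the structure with universe $V$ and the binary edge relation, and $\lceil G\rceil=\langle V\cup E,\mathrm{inc}\rangle$ is the structure whose universe contains the vertices and the edges, with $\mathrm{inc}\subseteq V\times E$ the incidence relation. The quantifier-rank counts both first-order and set quantifiers. A structure is connected if it is not the disjoint union of two nonempty substructures; connected components are maximal nonempty connected substructures. $\mathrm{Sep}(G,k)$ is the maximum, over all vertex sets $S$ with $|S|\le k$, of the number of connected components of $G-S$ (computed in $\lfloor G\rfloor$). $\exp_0(n)=n$, $\exp_{k+1}(n)=2^{\exp_k(n)}$. *)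

theory Defs
  imports Main
begin

definition graph :: "nat set \<Rightarrow> nat set set \<Rightarrow> bool" where
  "graph V E \<longleftrightarrow> finite V \<and> (\<forall>e\<in>E. \<exists>u v. u \<noteq> v \<and> u \<in> V \<and> v \<in> V \<and> e = {u, v})"

definition adj_minus :: "nat set \<Rightarrow> nat set set \<Rightarrow> nat set \<Rightarrow> (nat \<times> nat) set" where
  "adj_minus V E S = {(u, w). u \<in> V - S \<and> w \<in> V - S \<and> {u, w} \<in> E}"

definition components_minus :: "nat set \<Rightarrow> nat set set \<Rightarrow> nat set \<Rightarrow> nat set set" where
  "components_minus V E S =
     (\<lambda>v. {w \<in> V - S. (v, w) \<in> (adj_minus V E S)\<^sup>*}) ` (V - S)"

definition Sep :: "nat set \<Rightarrow> nat set set \<Rightarrow> nat \<Rightarrow> nat" where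
  "Sep V E k = Max {card (components_minus V E S) | S. S \<subseteq> V \<and> card S \<le> k}"

section \<open>The incidence structure \<lceil>G\<rceil>\<close>

datatype inc_elem = VElem nat | EElem "nat set"

definition inc_univ :: "nat set \<Rightarrow> nat set set \<Rightarrow> inc_elem set" where
  "inc_univ V E = VElem ` V \<union> EElem ` E"

definition inc_rel :: "nat set \<Rightarrow> nat set set \<Rightarrow> inc_elem \<Rightarrow> inc_elem \<Rightarrow> bool" where
  "inc_rel V E a b \<longleftrightarrow> (\<exists>v e. a = VElem v \<and> b = EElem e \<and> v \<in> V \<and> e \<in> E \<and> v \<in> e)"

text \<open>First-order variables and set variables are named by natural numbers
  (two separate name spaces).\<close>
datatype mso =
    Eq nat nat
  | Mem nat nat
  | Rel nat nat
  | Neg mso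
  | Conj mso mso
  | Disj mso mso
  | Ex1 nat mso
  | All1 nat mso
  | Ex2 nat mso
  | All2 nat mso

fun sat :: "'a set \<Rightarrow> ('a \<Rightarrow> 'a \<Rightarrow> bool) \<Rightarrow> (nat \<Rightarrow> 'a) \<Rightarrow> (nat \<Rightarrow> 'a set) \<Rightarrow> mso \<Rightarrow> bool" where
  "sat U R \<alpha> \<beta> (Eq x y) = (\<alpha> x = \<alpha> y)"
| "sat U R \<alpha> \<beta> (Mem x X) = (\<alpha> x \<in> \<beta> X)"
| "sat U R \<alpha> \<beta> (Rel x y) = R (\<alpha> x) (\<alpha> y)"
| "sat U R \<alpha> \<beta> (Neg \<phi>) = (\<not> sat U R \<alpha> \<beta> \<phi>)"
| "sat U R \<alpha> \<beta> (Conj \<phi> \<psi>) = (sat U R \<alpha> \<beta> \<phi> \<and> sat U R \<alpha> \<beta> \<psi>)"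
| "sat U R \<alpha> \<beta> (Disj \<phi> \<psi>) = (sat U R \<alpha> \<beta> \<phi> \<or> sat U R \<alpha> \<beta> \<psi>)"
| "sat U R \<alpha> \<beta> (Ex1 x \<phi>) = (\<exists>a\<in>U. sat U R (\<alpha>(x := a)) \<beta> \<phi>)"
| "sat U R \<alpha> \<beta> (All1 x \<phi>) = (\<forall>a\<in>U. sat U R (\<alpha>(x := a)) \<beta> \<phi>)"
| "sat U R \<alpha> \<beta> (Ex2 X \<phi>) = (\<exists>A. A \<subseteq> U \<and> sat U R \<alpha> (\<beta>(X := A)) \<phi>)"
| "sat U R \<alpha> \<beta> (All2 X \<phi>) = (\<forall>A. A \<subseteq> U \<longrightarrow> sat U R \<alpha> (\<beta>(X := A)) \<phi>)"

fun qr :: "mso \<Rightarrow> nat" where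
  "qr (Eq _ _) = 0"
| "qr (Mem _ _) = 0"
| "qr (Rel _ _) = 0"
| "qr (Neg \<phi>) = qr \<phi>"
| "qr (Conj \<phi> \<psi>) = max (qr \<phi>) (qr \<psi>)"
| "qr (Disj \<phi> \<psi>) = max (qr \<phi>) (qr \<psi>)"
| "qr (Ex1 _ \<phi>) = Suc (qr \<phi>)"
| "qr (All1 _ \<phi>) = Suc (qr \<phi>)"
| "qr (Ex2 _ \<phi>) = Suc (qr \<phi>)"
| "qr (All2 _ \<phi>) = Suc (qr \<phi>)"

fun fv1 :: "mso \<Rightarrow> nat set" where
  "fv1 (Eq x y) = {x, y}"
| "fv1 (Mem x X) = {x}"
| "fv1 (Rel x y) = {x, y}"
| "fv1 (Neg \<phi>) = fv1 \<phi>"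
| "fv1 (Conj \<phi> \<psi>) = fv1 \<phi> \<union> fv1 \<psi>"
| "fv1 (Disj \<phi> \<psi>) = fv1 \<phi> \<union> fv1 \<psi>"
| "fv1 (Ex1 x \<phi>) = fv1 \<phi> - {x}"
| "fv1 (All1 x \<phi>) = fv1 \<phi> - {x}"
| "fv1 (Ex2 _ \<phi>) = fv1 \<phi>"
| "fv1 (All2 _ \<phi>) = fv1 \<phi>"

fun fv2 :: "mso \<Rightarrow> nat set" where
  "fv2 (Eq x y) = {}"
| "fv2 (Mem x X) = {X}"
| "fv2 (Rel x y) = {}"
| "fv2 (Neg \<phi>) = fv2 \<phi>"
| "fv2 (Conj \<phi> \<psi>) = fv2 \<phi> \<union> fv2 \<psi>"
| "fv2 (Disj \<phi> \<psi>) = fv2 \<phi> \<union> fv2 \<psi>"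
| "fv2 (Ex1 _ \<phi>) = fv2 \<phi>"
| "fv2 (All1 _ \<phi>) = fv2 \<phi>"
| "fv2 (Ex2 X \<phi>) = fv2 \<phi> - {X}"
| "fv2 (All2 X \<phi>) = fv2 \<phi> - {X}"

text \<open>The binary relation defined by \<phi>(x,y;P_0..P_{n-1}) in a structure,
  where x is first-order variable 0, y is first-order variable 1, and
  P_i is set variable i.\<close>
definition defined_rel :: "'a set \<Rightarrow> ('a \<Rightarrow> 'a \<Rightarrow> bool) \<Rightarrow> mso \<Rightarrow> 'a set list \<Rightarrow> ('a \<times> 'a) set" where
  "defined_rel U R \<phi> Ps =
     {(a, b). a \<in> U \<and> b \<in> U \<and>
        sat U R (\<lambda>i. if i = 0 then a else b) (\<lambda>i. if i < length Ps then Ps ! i else {}) \<phi>}"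

definition mso_orderable :: "nat \<Rightarrow> nat \<Rightarrow> 'a set \<Rightarrow> ('a \<Rightarrow> 'a \<Rightarrow> bool) \<Rightarrow> bool" where
  "mso_orderable n m U R \<longleftrightarrow>
     (\<exists>\<phi> Ps. qr \<phi> \<le> m \<and> fv1 \<phi> \<subseteq> {0, 1} \<and> fv2 \<phi> \<subseteq> {..<n} \<and>
        length Ps = n \<and> (\<forall>P\<in>set Ps. P \<subseteq> U) \<and>
        linear_order_on U (defined_rel U R \<phi> Ps))"

fun exp_tower :: "nat \<Rightarrow> nat \<Rightarrow> nat" where
  "exp_tower 0 n = n"
| "exp_tower (Suc k) n = 2 ^ exp_tower k n"

section \<open>Computability via Kleene's partial recursive functions\<close>

datatype recf = Zero | Succ | Proj nat | Comp recf "recf list" | PrimRec recf recf | Minim recf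

inductive eval :: "recf \<Rightarrow> nat list \<Rightarrow> nat \<Rightarrow> bool" where
  eval_Zero: "eval Zero xs 0"
| eval_Succ: "eval Succ (x # xs) (Suc x)"
| eval_Proj: "i < length xs \<Longrightarrow> eval (Proj i) xs (xs ! i)"
| eval_Comp: "length ys = length gs \<Longrightarrow> (\<forall>j < length gs. eval (gs ! j) xs (ys ! j)) \<Longrightarrow>
     eval f ys z \<Longrightarrow> eval (Comp f gs) xs z"
| eval_PrimRec0: "eval f xs y \<Longrightarrow> eval (PrimRec f g) (0 # xs) y"
| eval_PrimRecS: "eval (PrimRec f g) (n # xs) y \<Longrightarrow> eval g (n # y # xs) z \<Longrightarrow>
     eval (PrimRec f g) (Suc n # xs) z"
| eval_Minim: "eval f (n # xs) 0 \<Longrightarrow> (\<forall>i < n. \<exists>y. y > 0 \<and> eval f (i # xs) y) \<Longrightarrow>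
     eval (Minim f) xs n"

definition computable2 :: "(nat \<Rightarrow> nat \<Rightarrow> nat) \<Rightarrow> bool" where
  "computable2 g \<longleftrightarrow> (\<exists>c. \<forall>n m. eval c [n, m] (g n m))"

end

theory Submission
  imports Defs
begin


fun allv1 :: "mso \<Rightarrow> nat set" where
  "allv1 (Eq x y) = {x, y}"
| "allv1 (Mem x X) = {x}"
| "allv1 (Rel x y) = {x, y}"
| "allv1 (Neg \<phi>) = allv1 \<phi>"
| "allv1 (Conj \<phi> \<psi>) = allv1 \<phi> \<union> allv1 \<psi>"
| "allv1 (Disj \<phi> \<psi>) = allv1 \<phi> \<union> allv1 \<psi>"
| "allv1 (Ex1 x \<phi>) = insert x (allv1 \<phi>)"
| "allv1 (All1 x \<phi>) = insert x (allv1 \<phi>)"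
| "allv1 (Ex2 _ \<phi>) = allv1 \<phi>"
| "allv1 (All2 _ \<phi>) = allv1 \<phi>"

fun allv2 :: "mso \<Rightarrow> nat set" where
  "allv2 (Eq x y) = {}"
| "allv2 (Mem x X) = {X}"
| "allv2 (Rel x y) = {}"
| "allv2 (Neg \<phi>) = allv2 \<phi>"
| "allv2 (Conj \<phi> \<psi>) = allv2 \<phi> \<union> allv2 \<psi>"
| "allv2 (Disj \<phi> \<psi>) = allv2 \<phi> \<union> allv2 \<psi>"
| "allv2 (Ex1 _ \<phi>) = allv2 \<phi>"
| "allv2 (All1 _ \<phi>) = allv2 \<phi>"
| "allv2 (Ex2 X \<phi>) = insert X (allv2 \<phi>)"
| "allv2 (All2 X \<phi>) = insert X (allv2 \<phi>)"

fun ren :: "nat \<Rightarrow> (nat \<Rightarrow> nat) \<Rightarrow> (nat \<Rightarrow> nat) \<Rightarrow> nat \<Rightarrow> mso \<Rightarrow> mso" where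
  "ren b \<rho> \<sigma> d (Eq x y) = Eq (\<rho> x) (\<rho> y)"
| "ren b \<rho> \<sigma> d (Mem x X) = Mem (\<rho> x) (\<sigma> X)"
| "ren b \<rho> \<sigma> d (Rel x y) = Rel (\<rho> x) (\<rho> y)"
| "ren b \<rho> \<sigma> d (Neg \<phi>) = Neg (ren b \<rho> \<sigma> d \<phi>)"
| "ren b \<rho> \<sigma> d (Conj \<phi> \<psi>) = Conj (ren b \<rho> \<sigma> d \<phi>) (ren b \<rho> \<sigma> d \<psi>)"
| "ren b \<rho> \<sigma> d (Disj \<phi> \<psi>) = Disj (ren b \<rho> \<sigma> d \<phi>) (ren b \<rho> \<sigma> d \<psi>)"
| "ren b \<rho> \<sigma> d (Ex1 x \<phi>) = Ex1 (2 + d) (ren b (\<rho>(x := 2 + d)) \<sigma> (Suc d) \<phi>)"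
| "ren b \<rho> \<sigma> d (All1 x \<phi>) = All1 (2 + d) (ren b (\<rho>(x := 2 + d)) \<sigma> (Suc d) \<phi>)"
| "ren b \<rho> \<sigma> d (Ex2 X \<phi>) = Ex2 (b + d) (ren b \<rho> (\<sigma>(X := b + d)) (Suc d) \<phi>)"
| "ren b \<rho> \<sigma> d (All2 X \<phi>) = All2 (b + d) (ren b \<rho> (\<sigma>(X := b + d)) (Suc d) \<phi>)"

lemma ren_sat:
  "(\<forall>x\<in>fv1 \<phi>. \<rho> x < 2 + d \<and> \<alpha>' (\<rho> x) = \<alpha> x) \<Longrightarrow> (\<forall>X\<in>fv2 \<phi>. \<sigma> X < b + d \<and> \<beta>' (\<sigma> X) = \<beta> X) \<Longrightarrow>
   sat U R \<alpha>' \<beta>' (ren b \<rho> \<sigma> d \<phi>) = sat U R \<alpha> \<beta> \<phi>"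
proof (induction \<phi> arbitrary: \<rho> \<sigma> d \<alpha> \<alpha>' \<beta> \<beta>')
  case (Ex1 x \<phi>)
  show ?case
    apply simp
    apply (intro bex_cong refl Ex1.IH)
    using Ex1.prems apply auto
    using Ex1.prems by (metis DiffI less_irrefl_nat singletonD less_SucI)+
next
  case (All1 x \<phi>)
  show ?case
    apply simp
    apply (intro ball_cong refl All1.IH)
    using All1.prems apply auto
    using All1.prems by (metis DiffI less_irrefl_nat singletonD less_SucI)+
next
  case (Ex2 X \<phi>)
  show ?case
    apply simp
    apply (intro ex_cong conj_cong refl Ex2.IH)
    using Ex2.prems apply auto
    using Ex2.prems by (metis DiffI less_irrefl_nat singletonD less_SucI add_Suc_right)+
next
  case (All2 X \<phi>)
  show ?case
    apply simp
    apply (intro all_cong imp_cong refl All2.IH)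
    using All2.prems apply auto
    using All2.prems by (metis DiffI less_irrefl_nat singletonD less_SucI add_Suc_right)+
next
  case (Conj p q)
  have "sat U R \<alpha>' \<beta>' (ren b \<rho> \<sigma> d p) = sat U R \<alpha> \<beta> p"
    by (rule Conj.IH(1)) (use Conj.prems in auto)
  moreover have "sat U R \<alpha>' \<beta>' (ren b \<rho> \<sigma> d q) = sat U R \<alpha> \<beta> q"
    by (rule Conj.IH(2)) (use Conj.prems in auto)
  ultimately show ?case by simp
next
  case (Disj p q)
  have "sat U R \<alpha>' \<beta>' (ren b \<rho> \<sigma> d p) = sat U R \<alpha> \<beta> p"
    by (rule Disj.IH(1)) (use Disj.prems in auto)
  moreover have "sat U R \<alpha>' \<beta>' (ren b \<rho> \<sigma> d q) = sat U R \<alpha> \<beta> q"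
    by (rule Disj.IH(2)) (use Disj.prems in auto)
  ultimately show ?case by simp
next
  case (Neg p)
  have "sat U R \<alpha>' \<beta>' (ren b \<rho> \<sigma> d p) = sat U R \<alpha> \<beta> p"
    by (rule Neg.IH) (use Neg.prems in auto)
  then show ?case by simp
qed (simp; fail)+

lemma ren_qr: "qr (ren b \<rho> \<sigma> d \<phi>) = qr \<phi>"
  by (induction \<phi> arbitrary: \<rho> \<sigma> d) auto

lemma ren_allv1: "\<rho> ` fv1 \<phi> \<subseteq> {..<2 + d} \<Longrightarrow> allv1 (ren b \<rho> \<sigma> d \<phi>) \<subseteq> {..<2 + d + qr \<phi>}"
proof (induction \<phi> arbitrary: \<rho> \<sigma> d)
  case (Ex1 x \<phi>)
  have "allv1 (ren b (\<rho>(x := 2 + d)) \<sigma> (Suc d) \<phi>) \<subseteq> {..<2 + Suc d + qr \<phi>}"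
    apply (rule Ex1.IH) using Ex1.prems by auto
  then show ?case by auto
next
  case (All1 x \<phi>)
  have "allv1 (ren b (\<rho>(x := 2 + d)) \<sigma> (Suc d) \<phi>) \<subseteq> {..<2 + Suc d + qr \<phi>}"
    apply (rule All1.IH) using All1.prems by auto
  then show ?case by auto
next
  case (Ex2 X \<phi>)
  have "allv1 (ren b \<rho> (\<sigma>(X := b + d)) (Suc d) \<phi>) \<subseteq> {..<2 + Suc d + qr \<phi>}"
    apply (rule Ex2.IH) using Ex2.prems by auto
  then show ?case by auto
next
  case (All2 X \<phi>)
  have "allv1 (ren b \<rho> (\<sigma>(X := b + d)) (Suc d) \<phi>) \<subseteq> {..<2 + Suc d + qr \<phi>}"
    apply (rule All2.IH) using All2.prems by auto
  then show ?case by auto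
next
  case (Conj p q)
  have "allv1 (ren b \<rho> \<sigma> d p) \<subseteq> {..<2 + d + qr p}" by (rule Conj.IH(1)) (use Conj.prems in auto)
  moreover have "allv1 (ren b \<rho> \<sigma> d q) \<subseteq> {..<2 + d + qr q}" by (rule Conj.IH(2)) (use Conj.prems in auto)
  ultimately show ?case by force
next
  case (Disj p q)
  have "allv1 (ren b \<rho> \<sigma> d p) \<subseteq> {..<2 + d + qr p}" by (rule Disj.IH(1)) (use Disj.prems in auto)
  moreover have "allv1 (ren b \<rho> \<sigma> d q) \<subseteq> {..<2 + d + qr q}" by (rule Disj.IH(2)) (use Disj.prems in auto)
  ultimately show ?case by force
next
  case (Neg p)
  then show ?case by simp
qed auto

lemma ren_allv2: "\<sigma> ` fv2 \<phi> \<subseteq> {..<b + d} \<Longrightarrow> allv2 (ren b \<rho> \<sigma> d \<phi>) \<subseteq> {..<b + d + qr \<phi>}"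
proof (induction \<phi> arbitrary: \<rho> \<sigma> d)
  case (Ex1 x \<phi>)
  have "allv2 (ren b (\<rho>(x := 2 + d)) \<sigma> (Suc d) \<phi>) \<subseteq> {..<b + Suc d + qr \<phi>}"
    apply (rule Ex1.IH) using Ex1.prems by auto
  then show ?case by auto
next
  case (All1 x \<phi>)
  have "allv2 (ren b (\<rho>(x := 2 + d)) \<sigma> (Suc d) \<phi>) \<subseteq> {..<b + Suc d + qr \<phi>}"
    apply (rule All1.IH) using All1.prems by auto
  then show ?case by auto
next
  case (Ex2 X \<phi>)
  have "allv2 (ren b \<rho> (\<sigma>(X := b + d)) (Suc d) \<phi>) \<subseteq> {..<b + Suc d + qr \<phi>}"
    apply (rule Ex2.IH) using Ex2.prems by auto
  then show ?case by auto
next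
  case (All2 X \<phi>)
  have "allv2 (ren b \<rho> (\<sigma>(X := b + d)) (Suc d) \<phi>) \<subseteq> {..<b + Suc d + qr \<phi>}"
    apply (rule All2.IH) using All2.prems by auto
  then show ?case by auto
next
  case (Conj p q)
  have "allv2 (ren b \<rho> \<sigma> d p) \<subseteq> {..<b + d + qr p}" by (rule Conj.IH(1)) (use Conj.prems in auto)
  moreover have "allv2 (ren b \<rho> \<sigma> d q) \<subseteq> {..<b + d + qr q}" by (rule Conj.IH(2)) (use Conj.prems in auto)
  ultimately show ?case by force
next
  case (Disj p q)
  have "allv2 (ren b \<rho> \<sigma> d p) \<subseteq> {..<b + d + qr p}" by (rule Disj.IH(1)) (use Disj.prems in auto)
  moreover have "allv2 (ren b \<rho> \<sigma> d q) \<subseteq> {..<b + d + qr q}" by (rule Disj.IH(2)) (use Disj.prems in auto)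
  ultimately show ?case by force
next
  case (Neg p)
  then show ?case by simp
qed auto

lemma ren_fv1: "fv1 (ren b \<rho> \<sigma> d \<phi>) \<subseteq> \<rho> ` fv1 \<phi>"
proof (induction \<phi> arbitrary: \<rho> \<sigma> d)
  case (Ex1 x \<phi>)
  then show ?case by (fastforce simp: image_iff)
next
  case (All1 x \<phi>)
  then show ?case by (fastforce simp: image_iff)
qed fastforce+


type_synonym 'a pos = "'a set \<times> nat set \<times> (nat \<Rightarrow> 'a) \<times> (nat \<Rightarrow> 'a set)"

fun rem :: "nat \<Rightarrow> 'a pos \<Rightarrow> 'a pos" where
  "rem v (A, F, \<alpha>, \<beta>) = (A, F - {v}, \<alpha>, \<beta>)"
fun add :: "nat \<Rightarrow> 'a \<Rightarrow> 'a pos \<Rightarrow> 'a pos" where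
  "add v a (A, F, \<alpha>, \<beta>) = (A, insert v F, \<alpha>(v := a), \<beta>)"
fun setm :: "nat \<Rightarrow> 'a set \<Rightarrow> 'a pos \<Rightarrow> 'a pos" where
  "setm X S (A, F, \<alpha>, \<beta>) = (A, F, \<alpha>, \<beta>(X := S))"

lemma fst_moves[simp]: "fst (rem v p) = fst p" "fst (add v a p) = fst p" "fst (setm X S p) = fst p"
  by (cases p; auto)+

locale gm =
  fixes R :: "'a \<Rightarrow> 'a \<Rightarrow> bool" and sl :: "'a list" and N1 N2 :: "nat set"
begin

fun atom :: "'a pos \<Rightarrow> 'a pos \<Rightarrow> bool" where
  "atom (A, F, \<alpha>, \<beta>) (B, F', \<alpha>', \<beta>') =
    (F = F' \<and> (\<forall>x\<in>F. \<forall>y\<in>F. (\<alpha> x = \<alpha> y \<longleftrightarrow> \<alpha>' x = \<alpha>' y) \<and> (R (\<alpha> x) (\<alpha> y) \<longleftrightarrow> R (\<alpha>' x) (\<alpha>' y))) \<and>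
     (\<forall>x\<in>F. \<forall>X\<in>N2. (\<alpha> x \<in> \<beta> X \<longleftrightarrow> \<alpha>' x \<in> \<beta>' X)) \<and>
     (\<forall>x\<in>F. \<forall>j<length sl. (R (\<alpha> x) (sl ! j) \<longleftrightarrow> R (\<alpha>' x) (sl ! j)) \<and> (R (sl ! j) (\<alpha> x) \<longleftrightarrow> R (sl ! j) (\<alpha>' x))))"

fun eqv :: "nat \<Rightarrow> 'a pos \<Rightarrow> 'a pos \<Rightarrow> bool" where
  "eqv 0 p q = atom p q"
| "eqv (Suc r) p q =
    (eqv r p q \<and> (\<forall>v\<in>N1. eqv r (rem v p) (rem v q)) \<and>
     (\<forall>v\<in>N1. \<forall>a\<in>fst p. \<exists>b\<in>fst q. eqv r (add v a p) (add v b q)) \<and>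
     (\<forall>v\<in>N1. \<forall>b\<in>fst q. \<exists>a\<in>fst p. eqv r (add v a p) (add v b q)) \<and>
     (\<forall>X\<in>N2. \<forall>S. S \<subseteq> fst p \<longrightarrow> (\<exists>T. T \<subseteq> fst q \<and> eqv r (setm X S p) (setm X T q))) \<and>
     (\<forall>X\<in>N2. \<forall>T. T \<subseteq> fst q \<longrightarrow> (\<exists>S. S \<subseteq> fst p \<and> eqv r (setm X S p) (setm X T q))))"

lemma atom_refl: "atom p p"
  by (cases p) auto

lemma atom_sym: "atom p q \<Longrightarrow> atom q p"
  by (cases p; cases q) auto

lemma atom_trans: "atom p q \<Longrightarrow> atom q s \<Longrightarrow> atom p s"
  by (cases p; cases q; cases s) simp

lemma eqv_refl: "eqv r p p"
proof (induction r arbitrary: p)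
  case 0 then show ?case by (simp add: atom_refl)
next
  case (Suc r) then show ?case unfolding eqv.simps by blast
qed

lemma eqv_sym: "eqv r p q \<Longrightarrow> eqv r q p"
proof (induction r arbitrary: p q)
  case 0 then show ?case using atom_sym[of p q] by simp
next
  case (Suc r)
  note A0 = Suc.prems[unfolded eqv.simps]
  note A = A0[THEN conjunct1] A0[THEN conjunct2, THEN conjunct1] A0[THEN conjunct2, THEN conjunct2, THEN conjunct1]
    A0[THEN conjunct2, THEN conjunct2, THEN conjunct2, THEN conjunct1]
    A0[THEN conjunct2, THEN conjunct2, THEN conjunct2, THEN conjunct2, THEN conjunct1]
    A0[THEN conjunct2, THEN conjunct2, THEN conjunct2, THEN conjunct2, THEN conjunct2]
  have IH: "\<And>p q. eqv r p q \<Longrightarrow> eqv r q p" by (rule Suc.IH)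
  have c1: "eqv r q p" using A(1) IH by blast
  have c2: "\<forall>v\<in>N1. eqv r (rem v q) (rem v p)" using A(2) IH by blast
  have c3: "\<forall>v\<in>N1. \<forall>a\<in>fst q. \<exists>b\<in>fst p. eqv r (add v a q) (add v b p)"
  proof (intro ballI)
    fix v a assume "v \<in> N1" "a \<in> fst q"
    then obtain b where "b \<in> fst p" "eqv r (add v b p) (add v a q)" using A(4) by blast
    then show "\<exists>b\<in>fst p. eqv r (add v a q) (add v b p)" using IH by blast
  qed
  have c4: "\<forall>v\<in>N1. \<forall>b\<in>fst p. \<exists>a\<in>fst q. eqv r (add v a q) (add v b p)"
  proof (intro ballI)
    fix v b assume "v \<in> N1" "b \<in> fst p"
    then obtain a where "a \<in> fst q" "eqv r (add v b p) (add v a q)" using A(3) by blast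
    then show "\<exists>a\<in>fst q. eqv r (add v a q) (add v b p)" using IH by blast
  qed
  have c5: "\<forall>X\<in>N2. \<forall>S. S \<subseteq> fst q \<longrightarrow> (\<exists>T. T \<subseteq> fst p \<and> eqv r (setm X S q) (setm X T p))"
  proof (intro ballI allI impI)
    fix X S assume x: "X \<in> N2" and t: "S \<subseteq> fst q"
    obtain T where "T \<subseteq> fst p" "eqv r (setm X T p) (setm X S q)" using A(6)[rule_format, OF x t] by blast
    then show "\<exists>T. T \<subseteq> fst p \<and> eqv r (setm X S q) (setm X T p)" using IH by blast
  qed
  have c6: "\<forall>X\<in>N2. \<forall>T. T \<subseteq> fst p \<longrightarrow> (\<exists>S. S \<subseteq> fst q \<and> eqv r (setm X S q) (setm X T p))"
  proof (intro ballI allI impI)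
    fix X T assume x: "X \<in> N2" and t: "T \<subseteq> fst p"
    obtain S where "S \<subseteq> fst q" "eqv r (setm X T p) (setm X S q)" using A(5)[rule_format, OF x t] by blast
    then show "\<exists>S. S \<subseteq> fst q \<and> eqv r (setm X S q) (setm X T p)" using IH by blast
  qed
  show ?case using c1 c2 c3 c4 c5 c6 by (simp only: eqv.simps)
qed

lemma eqvSucD:
  assumes "eqv (Suc r) p q"
  shows "eqv r p q" "\<And>v. v \<in> N1 \<Longrightarrow> eqv r (rem v p) (rem v q)"
    "\<And>v a. v \<in> N1 \<Longrightarrow> a \<in> fst p \<Longrightarrow> \<exists>b\<in>fst q. eqv r (add v a p) (add v b q)"
    "\<And>v b. v \<in> N1 \<Longrightarrow> b \<in> fst q \<Longrightarrow> \<exists>a\<in>fst p. eqv r (add v a p) (add v b q)"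
    "\<And>X S. X \<in> N2 \<Longrightarrow> S \<subseteq> fst p \<Longrightarrow> \<exists>T. T \<subseteq> fst q \<and> eqv r (setm X S p) (setm X T q)"
    "\<And>X T. X \<in> N2 \<Longrightarrow> T \<subseteq> fst q \<Longrightarrow> \<exists>S. S \<subseteq> fst p \<and> eqv r (setm X S p) (setm X T q)"
  using assms by (simp_all only: eqv.simps)

lemma eqvSucI:
  assumes "eqv r p q" "\<And>v. v \<in> N1 \<Longrightarrow> eqv r (rem v p) (rem v q)"
    "\<And>v a. v \<in> N1 \<Longrightarrow> a \<in> fst p \<Longrightarrow> \<exists>b\<in>fst q. eqv r (add v a p) (add v b q)"
    "\<And>v b. v \<in> N1 \<Longrightarrow> b \<in> fst q \<Longrightarrow> \<exists>a\<in>fst p. eqv r (add v a p) (add v b q)"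
    "\<And>X S. X \<in> N2 \<Longrightarrow> S \<subseteq> fst p \<Longrightarrow> \<exists>T. T \<subseteq> fst q \<and> eqv r (setm X S p) (setm X T q)"
    "\<And>X T. X \<in> N2 \<Longrightarrow> T \<subseteq> fst q \<Longrightarrow> \<exists>S. S \<subseteq> fst p \<and> eqv r (setm X S p) (setm X T q)"
  shows "eqv (Suc r) p q"
  apply (simp only: eqv.simps)
  apply (intro conjI ballI allI impI)
       apply (rule assms(1))
      apply (rule assms(2); assumption)
     apply (rule assms(3); assumption)
    apply (rule assms(4); assumption)
   apply (rule assms(5); assumption)
  apply (rule assms(6); assumption)
  done

lemma eqv_trans: "eqv r p q \<Longrightarrow> eqv r q s \<Longrightarrow> eqv r p s"
proof (induction r arbitrary: p q s)
  case 0 then show ?case using atom_trans by simp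
next
  case (Suc r)
  note A = eqvSucD[OF Suc.prems(1)] and B = eqvSucD[OF Suc.prems(2)]
  show ?case
  proof (rule eqvSucI)
    show "eqv r p s" using A(1) B(1) Suc.IH by blast
  next
    fix v assume "v \<in> N1" then show "eqv r (rem v p) (rem v s)" using A(2) B(2) Suc.IH by blast
  next
    fix v a assume v: "v \<in> N1" and a: "a \<in> fst p"
    obtain b where b: "b \<in> fst q" "eqv r (add v a p) (add v b q)" using A(3)[OF v a] by blast
    obtain c where c: "c \<in> fst s" "eqv r (add v b q) (add v c s)" using B(3)[OF v b(1)] by blast
    show "\<exists>c\<in>fst s. eqv r (add v a p) (add v c s)" using b c Suc.IH by blast
  next
    fix v c assume v: "v \<in> N1" and c: "c \<in> fst s"
    obtain b where b: "b \<in> fst q" "eqv r (add v b q) (add v c s)" using B(4)[OF v c] by blast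
    obtain a where a: "a \<in> fst p" "eqv r (add v a p) (add v b q)" using A(4)[OF v b(1)] by blast
    show "\<exists>a\<in>fst p. eqv r (add v a p) (add v c s)" using b a Suc.IH by blast
  next
    fix X S assume v: "X \<in> N2" and a: "S \<subseteq> fst p"
    obtain T where b: "T \<subseteq> fst q" "eqv r (setm X S p) (setm X T q)" using A(5)[OF v a] by blast
    obtain T' where c: "T' \<subseteq> fst s" "eqv r (setm X T q) (setm X T' s)" using B(5)[OF v b(1)] by blast
    show "\<exists>T'. T' \<subseteq> fst s \<and> eqv r (setm X S p) (setm X T' s)" using b c Suc.IH by blast
  next
    fix X T' assume v: "X \<in> N2" and c: "T' \<subseteq> fst s"
    obtain T where b: "T \<subseteq> fst q" "eqv r (setm X T q) (setm X T' s)" using B(6)[OF v c] by blast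
    obtain S where a: "S \<subseteq> fst p" "eqv r (setm X S p) (setm X T q)" using A(6)[OF v b(1)] by blast
    show "\<exists>S. S \<subseteq> fst p \<and> eqv r (setm X S p) (setm X T' s)" using b a Suc.IH by blast
  qed
qed

lemma eqv_imp_atom: "eqv r p q \<Longrightarrow> atom p q"
  by (induction r) auto

fun agree :: "'a pos \<Rightarrow> 'a pos \<Rightarrow> bool" where
  "agree (A, F, \<alpha>, \<beta>) (A', F', \<alpha>', \<beta>') =
    (A' = A \<and> F' = F \<and> (\<forall>x\<in>F. \<alpha>' x = \<alpha> x) \<and> (\<forall>X\<in>N2. \<forall>x\<in>F. (\<alpha> x \<in> \<beta>' X \<longleftrightarrow> \<alpha> x \<in> \<beta> X)) \<and>
     (\<forall>X\<in>N2. \<beta>' X \<inter> A = \<beta> X \<inter> A))"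

lemma agree_rem: "agree p p' \<Longrightarrow> agree (rem v p) (rem v p')"
  by (cases p; cases p') auto
lemma agree_add: "agree p p' \<Longrightarrow> a \<in> fst p \<Longrightarrow> agree (add v a p) (add v a p')"
  by (cases p; cases p') auto
lemma agree_setm: "agree p p' \<Longrightarrow> agree (setm X S p) (setm X S p')"
  by (cases p; cases p') auto
lemma agree_fst: "agree p p' \<Longrightarrow> fst p' = fst p"
  by (cases p; cases p') auto

lemma atom_agree: "atom p q \<Longrightarrow> agree p p' \<Longrightarrow> atom p' q"
  by (cases p; cases p'; cases q) auto

lemma eqv_agree: "eqv r p q \<Longrightarrow> agree p p' \<Longrightarrow> eqv r p' q"
proof (induction r arbitrary: p q p')
  case 0 then show ?case using atom_agree by simp
next
  case (Suc r)
  note A = eqvSucD[OF Suc.prems(1)] and G = Suc.prems(2)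
  have f: "fst p' = fst p" using agree_fst[OF G] .
  show ?case
  proof (rule eqvSucI)
    show "eqv r p' q" using A(1) G Suc.IH by blast
  next
    fix v assume "v \<in> N1" then show "eqv r (rem v p') (rem v q)" using A(2) agree_rem[OF G] Suc.IH by blast
  next
    fix v a assume v: "v \<in> N1" and a: "a \<in> fst p'"
    then have a': "a \<in> fst p" using f by simp
    obtain b where b: "b \<in> fst q" "eqv r (add v a p) (add v b q)" using A(3)[OF v a'] by blast
    have "eqv r (add v a p') (add v b q)" using Suc.IH[OF b(2) agree_add[OF G a']] .
    then show "\<exists>b\<in>fst q. eqv r (add v a p') (add v b q)" using b(1) by blast
  next
    fix v b assume v: "v \<in> N1" and b: "b \<in> fst q"
    obtain a where a: "a \<in> fst p" "eqv r (add v a p) (add v b q)" using A(4)[OF v b] by blast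
    have "eqv r (add v a p') (add v b q)" using Suc.IH[OF a(2) agree_add[OF G a(1)]] .
    then show "\<exists>a\<in>fst p'. eqv r (add v a p') (add v b q)" using a(1) f by auto
  next
    fix X S assume v: "X \<in> N2" and a: "S \<subseteq> fst p'"
    then have a': "S \<subseteq> fst p" using f by simp
    obtain T where b: "T \<subseteq> fst q" "eqv r (setm X S p) (setm X T q)" using A(5)[OF v a'] by blast
    have "eqv r (setm X S p') (setm X T q)" using Suc.IH[OF b(2) agree_setm[OF G]] .
    then show "\<exists>T. T \<subseteq> fst q \<and> eqv r (setm X S p') (setm X T q)" using b(1) by blast
  next
    fix X T assume v: "X \<in> N2" and b: "T \<subseteq> fst q"
    obtain S where a: "S \<subseteq> fst p" "eqv r (setm X S p) (setm X T q)" using A(6)[OF v b] by blast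
    have "eqv r (setm X S p') (setm X T q)" using Suc.IH[OF a(2) agree_setm[OF G]] .
    then show "\<exists>S. S \<subseteq> fst p' \<and> eqv r (setm X S p') (setm X T q)" using a(1) f by auto
  qed
qed

lemma eqv_agree2: "eqv r p q \<Longrightarrow> agree q q' \<Longrightarrow> eqv r p q'"
  using eqv_agree eqv_sym by blast

lemma eqv_mono: "eqv (Suc r) p q \<Longrightarrow> eqv r p q"
  by simp

lemma eqv_le: "r' \<le> r \<Longrightarrow> eqv r p q \<Longrightarrow> eqv r' p q"
  by (induction r rule: dec_induct) auto

end


locale swp = gm R sl N1 N2 for R :: "'a \<Rightarrow> 'a \<Rightarrow> bool" and sl N1 N2 +
  fixes U A B :: "'a set"
  assumes AU: "A \<subseteq> U" and BU: "B \<subseteq> U" and AB: "A \<inter> B = {}"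
    and noR: "\<And>a b. a \<in> A \<Longrightarrow> b \<in> B \<Longrightarrow> \<not> R a b \<and> \<not> R b a"
    and bdry: "\<And>a w. a \<in> A \<union> B \<Longrightarrow> w \<in> U \<Longrightarrow> w \<notin> A \<Longrightarrow> w \<notin> B \<Longrightarrow> R a w \<or> R w a \<Longrightarrow> w \<in> set sl"
begin

definition inS :: "'a set \<Rightarrow> (nat \<Rightarrow> 'a) \<Rightarrow> nat set \<Rightarrow> nat set" where
  "inS C \<alpha> D = {x \<in> D. \<alpha> x \<in> C}"

definition ptc :: "'a \<Rightarrow> 'a \<Rightarrow> bool" where
  "ptc a a' \<longleftrightarrow> a \<in> U \<and> a' \<in> U \<and> (a \<notin> A \<and> a \<notin> B \<longrightarrow> a' = a) \<and> (a \<in> A \<longleftrightarrow> a' \<in> B) \<and> (a \<in> B \<longleftrightarrow> a' \<in> A)"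

definition Corr :: "nat \<Rightarrow> nat set \<Rightarrow> (nat \<Rightarrow> 'a) \<Rightarrow> (nat \<Rightarrow> 'a set) \<Rightarrow> (nat \<Rightarrow> 'a) \<Rightarrow> (nat \<Rightarrow> 'a set) \<Rightarrow> bool" where
  "Corr r D \<alpha> \<beta> \<alpha>' \<beta>' \<longleftrightarrow>
    (\<forall>x\<in>D. ptc (\<alpha> x) (\<alpha>' x)) \<and>
    (\<forall>X. \<beta> X - A - B = \<beta>' X - A - B) \<and>
    eqv r (A, inS A \<alpha> D, \<alpha>, \<beta>) (B, inS B \<alpha>' D, \<alpha>', \<beta>') \<and>
    eqv r (B, inS B \<alpha> D, \<alpha>, \<beta>) (A, inS A \<alpha>' D, \<alpha>', \<beta>')"

lemma ptc_sym: "ptc a a' \<Longrightarrow> ptc a' a"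
  unfolding ptc_def by blast

lemma CorrI: "\<forall>x\<in>D. ptc (\<alpha> x) (\<alpha>' x) \<Longrightarrow> \<forall>X. \<beta> X - A - B = \<beta>' X - A - B \<Longrightarrow>
    eqv r (A, inS A \<alpha> D, \<alpha>, \<beta>) (B, inS B \<alpha>' D, \<alpha>', \<beta>') \<Longrightarrow>
    eqv r (B, inS B \<alpha> D, \<alpha>, \<beta>) (A, inS A \<alpha>' D, \<alpha>', \<beta>') \<Longrightarrow> Corr r D \<alpha> \<beta> \<alpha>' \<beta>'"
  unfolding Corr_def by (intro conjI)

lemma CorrD: assumes "Corr r D \<alpha> \<beta> \<alpha>' \<beta>'"
  shows "\<forall>x\<in>D. ptc (\<alpha> x) (\<alpha>' x)" "\<forall>X. \<beta> X - A - B = \<beta>' X - A - B"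
    "eqv r (A, inS A \<alpha> D, \<alpha>, \<beta>) (B, inS B \<alpha>' D, \<alpha>', \<beta>')"
    "eqv r (B, inS B \<alpha> D, \<alpha>, \<beta>) (A, inS A \<alpha>' D, \<alpha>', \<beta>')"
  using assms unfolding Corr_def by simp_all

lemma Corr_sym: "Corr r D \<alpha> \<beta> \<alpha>' \<beta>' \<Longrightarrow> Corr r D \<alpha>' \<beta>' \<alpha> \<beta>"
proof -
  assume C: "Corr r D \<alpha> \<beta> \<alpha>' \<beta>'"
  show ?thesis
    apply (rule CorrI)
    using CorrD(1)[OF C] ptc_sym apply blast
    using CorrD(2)[OF C] apply simp
    using eqv_sym[OF CorrD(4)[OF C]] apply simp
    using eqv_sym[OF CorrD(3)[OF C]] apply simp
    done
qed

lemma ptc_upd: "\<forall>x\<in>D. ptc (\<alpha> x) (\<alpha>' x) \<Longrightarrow> ptc a b \<Longrightarrow> \<forall>x\<in>insert v D. ptc ((\<alpha>(v := a)) x) ((\<alpha>'(v := b)) x)"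
  by simp

lemma inS_upd: "inS C (\<alpha>(v := a)) (insert v D) = (if a \<in> C then insert v (inS C \<alpha> D) else inS C \<alpha> D - {v})"
  unfolding inS_def by auto

lemma agree_upd: "v \<notin> F \<Longrightarrow> agree (C, F, \<alpha>, \<beta>) (C, F, \<alpha>(v := a), \<beta>)"
  by simp

lemma agree_self: "agree p p"
  by (cases p) simp

lemma rem_eq: "rem v (C, F, \<alpha>, \<beta>) = (C, F - {v}, \<alpha>, \<beta>)" by simp
lemma add_eq: "add v a (C, F, \<alpha>, \<beta>) = (C, insert v F, \<alpha>(v := a), \<beta>)" by simp
lemma setm_eq: "setm X S (C, F, \<alpha>, \<beta>) = (C, F, \<alpha>, \<beta>(X := S))" by simp

lemma eqv_rem_upd:
  assumes "eqv (Suc r) (C, inS C \<alpha> D, \<alpha>, \<beta>) (C', inS C' \<alpha>' D, \<alpha>', \<beta>')" "v \<in> N1" "a \<notin> C" "a' \<notin> C'"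
  shows "eqv r (C, inS C (\<alpha>(v := a)) (insert v D), \<alpha>(v := a), \<beta>) (C', inS C' (\<alpha>'(v := a')) (insert v D), \<alpha>'(v := a'), \<beta>')"
proof -
  have "eqv r (C, inS C \<alpha> D - {v}, \<alpha>, \<beta>) (C', inS C' \<alpha>' D - {v}, \<alpha>', \<beta>')"
    using eqvSucD(2)[OF assms(1) assms(2)] by simp
  then have "eqv r (C, inS C \<alpha> D - {v}, \<alpha>(v := a), \<beta>) (C', inS C' \<alpha>' D - {v}, \<alpha>', \<beta>')"
    by (rule eqv_agree) (rule agree_upd, simp)
  then have "eqv r (C, inS C \<alpha> D - {v}, \<alpha>(v := a), \<beta>) (C', inS C' \<alpha>' D - {v}, \<alpha>'(v := a'), \<beta>')"
    by (rule eqv_agree2) (rule agree_upd, simp)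
  then show ?thesis using assms(3,4) by (simp add: inS_upd)
qed

lemma eqv_add_upd:
  assumes "eqv (Suc r) (C, inS C \<alpha> D, \<alpha>, \<beta>) (C', inS C' \<alpha>' D, \<alpha>', \<beta>')" "v \<in> N1" "a \<in> C"
  shows "\<exists>a'\<in>C'. eqv r (C, inS C (\<alpha>(v := a)) (insert v D), \<alpha>(v := a), \<beta>) (C', inS C' (\<alpha>'(v := a')) (insert v D), \<alpha>'(v := a'), \<beta>')"
proof -
  obtain b where b: "b \<in> C'" "eqv r (add v a (C, inS C \<alpha> D, \<alpha>, \<beta>)) (add v b (C', inS C' \<alpha>' D, \<alpha>', \<beta>'))"
    using eqvSucD(3)[OF assms(1) assms(2)] assms(3) by auto
  then show ?thesis using assms(3) by (auto simp: inS_upd)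
qed

lemma forth1:
  assumes C: "Corr (Suc r) D \<alpha> \<beta> \<alpha>' \<beta>'" and v: "v \<in> N1" and a: "a \<in> U"
  shows "\<exists>a'\<in>U. Corr r (insert v D) (\<alpha>(v := a)) \<beta> (\<alpha>'(v := a')) \<beta>'"
proof -
  note pw = CorrD(1)[OF C] and bb = CorrD(2)[OF C] and E1 = CorrD(3)[OF C] and E2 = CorrD(4)[OF C]
  consider (inA) "a \<in> A" | (inB) "a \<in> B" | (W) "a \<notin> A" "a \<notin> B" by blast
  then show ?thesis
  proof cases
    case inA
    obtain b where b: "b \<in> B" and e1: "eqv r (A, inS A (\<alpha>(v := a)) (insert v D), \<alpha>(v := a), \<beta>) (B, inS B (\<alpha>'(v := b)) (insert v D), \<alpha>'(v := b), \<beta>')"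
      using eqv_add_upd[OF E1 v inA] by blast
    have aB: "a \<notin> B" "b \<notin> A" using inA b AB by auto
    have e2: "eqv r (B, inS B (\<alpha>(v := a)) (insert v D), \<alpha>(v := a), \<beta>) (A, inS A (\<alpha>'(v := b)) (insert v D), \<alpha>'(v := b), \<beta>')"
      by (rule eqv_rem_upd[OF E2 v aB])
    have p: "ptc a b" unfolding ptc_def using a b inA aB BU by blast
    have "Corr r (insert v D) (\<alpha>(v := a)) \<beta> (\<alpha>'(v := b)) \<beta>'"
      by (rule CorrI[OF ptc_upd[OF pw p] bb e1 e2])
    then show ?thesis using b BU by blast
  next
    case inB
    obtain b where b: "b \<in> A" and e2: "eqv r (B, inS B (\<alpha>(v := a)) (insert v D), \<alpha>(v := a), \<beta>) (A, inS A (\<alpha>'(v := b)) (insert v D), \<alpha>'(v := b), \<beta>')"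
      using eqv_add_upd[OF E2 v inB] by blast
    have aB: "a \<notin> A" "b \<notin> B" using inB b AB by auto
    have e1: "eqv r (A, inS A (\<alpha>(v := a)) (insert v D), \<alpha>(v := a), \<beta>) (B, inS B (\<alpha>'(v := b)) (insert v D), \<alpha>'(v := b), \<beta>')"
      by (rule eqv_rem_upd[OF E1 v aB])
    have p: "ptc a b" unfolding ptc_def using a b inB aB AU by blast
    have "Corr r (insert v D) (\<alpha>(v := a)) \<beta> (\<alpha>'(v := b)) \<beta>'"
      by (rule CorrI[OF ptc_upd[OF pw p] bb e1 e2])
    then show ?thesis using b AU by blast
  next
    case W
    have e1: "eqv r (A, inS A (\<alpha>(v := a)) (insert v D), \<alpha>(v := a), \<beta>) (B, inS B (\<alpha>'(v := a)) (insert v D), \<alpha>'(v := a), \<beta>')"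
      by (rule eqv_rem_upd[OF E1 v W(1) W(2)])
    have e2: "eqv r (B, inS B (\<alpha>(v := a)) (insert v D), \<alpha>(v := a), \<beta>) (A, inS A (\<alpha>'(v := a)) (insert v D), \<alpha>'(v := a), \<beta>')"
      by (rule eqv_rem_upd[OF E2 v W(2) W(1)])
    have p: "ptc a a" unfolding ptc_def using a W by blast
    have "Corr r (insert v D) (\<alpha>(v := a)) \<beta> (\<alpha>'(v := a)) \<beta>'"
      by (rule CorrI[OF ptc_upd[OF pw p] bb e1 e2])
    then show ?thesis using a by blast
  qed
qed

lemma eqv_set_upd:
  assumes "eqv (Suc r) (C, inS C \<alpha> D, \<alpha>, \<beta>) (C', inS C' \<alpha>' D, \<alpha>', \<beta>')" "X \<in> N2"
  shows "\<exists>T'\<subseteq>C'. eqv r (C, inS C \<alpha> D, \<alpha>, \<beta>(X := T)) (C', inS C' \<alpha>' D, \<alpha>', \<beta>'(X := T'))"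
proof -
  obtain T' where T': "T' \<subseteq> C'" "eqv r (setm X (T \<inter> C) (C, inS C \<alpha> D, \<alpha>, \<beta>)) (setm X T' (C', inS C' \<alpha>' D, \<alpha>', \<beta>'))"
    using eqvSucD(5)[OF assms(1) assms(2), of "T \<inter> C"] by auto
  then have "eqv r (C, inS C \<alpha> D, \<alpha>, \<beta>(X := T \<inter> C)) (C', inS C' \<alpha>' D, \<alpha>', \<beta>'(X := T'))" by simp
  then have "eqv r (C, inS C \<alpha> D, \<alpha>, \<beta>(X := T)) (C', inS C' \<alpha>' D, \<alpha>', \<beta>'(X := T'))"
    by (rule eqv_agree) (auto simp: inS_def)
  then show ?thesis using T'(1) by blast
qed

lemma forth2:
  assumes C: "Corr (Suc r) D \<alpha> \<beta> \<alpha>' \<beta>'" and X: "X \<in> N2" and T: "T \<subseteq> U"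
  shows "\<exists>T'\<subseteq>U. Corr r D \<alpha> (\<beta>(X := T)) \<alpha>' (\<beta>'(X := T'))"
proof -
  note pw = CorrD(1)[OF C] and bb = CorrD(2)[OF C] and E1 = CorrD(3)[OF C] and E2 = CorrD(4)[OF C]
  obtain TB where TB: "TB \<subseteq> B" and e1: "eqv r (A, inS A \<alpha> D, \<alpha>, \<beta>(X := T)) (B, inS B \<alpha>' D, \<alpha>', \<beta>'(X := TB))"
    using eqv_set_upd[OF E1 X, of T] by blast
  obtain TA where TA: "TA \<subseteq> A" and e2: "eqv r (B, inS B \<alpha> D, \<alpha>, \<beta>(X := T)) (A, inS A \<alpha>' D, \<alpha>', \<beta>'(X := TA))"
    using eqv_set_upd[OF E2 X, of T] by blast
  define T' where "T' = (T - A - B) \<union> TA \<union> TB"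
  have T'U: "T' \<subseteq> U" using T TA TB AU BU unfolding T'_def by blast
  have tb: "T' \<inter> B = TB" using TA TB AB unfolding T'_def by blast
  have ta: "T' \<inter> A = TA" using TA TB AB unfolding T'_def by blast
  have e1': "eqv r (A, inS A \<alpha> D, \<alpha>, \<beta>(X := T)) (B, inS B \<alpha>' D, \<alpha>', \<beta>'(X := T'))"
    by (rule eqv_agree2[OF e1]) (use tb in \<open>auto simp: inS_def\<close>)
  have e2': "eqv r (B, inS B \<alpha> D, \<alpha>, \<beta>(X := T)) (A, inS A \<alpha>' D, \<alpha>', \<beta>'(X := T'))"
    by (rule eqv_agree2[OF e2]) (use ta in \<open>auto simp: inS_def\<close>)
  have "\<forall>Y. (\<beta>(X := T)) Y - A - B = (\<beta>'(X := T')) Y - A - B"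
    using bb TA TB unfolding T'_def by auto
  then have "Corr r D \<alpha> (\<beta>(X := T)) \<alpha>' (\<beta>'(X := T'))"
    by (rule CorrI[OF pw _ e1' e2'])
  then show ?thesis using T'U by blast
qed

lemma ptc_eq: "ptc a a' \<Longrightarrow> ptc b b' \<Longrightarrow> \<not>(a\<in>A \<and> b\<in>A) \<Longrightarrow> \<not>(a\<in>B \<and> b \<in> B) \<Longrightarrow> (a = b \<longleftrightarrow> a' = b')"
  unfolding ptc_def using AB by (smt (verit) disjoint_iff)
lemma ptc_W: "ptc a a' \<Longrightarrow> a \<notin> A \<Longrightarrow> a \<notin> B \<Longrightarrow> a' = a \<and> a \<in> U"
  unfolding ptc_def by blast
lemma ptc_A: "ptc a a' \<Longrightarrow> a \<in> A \<Longrightarrow> a' \<in> B"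
  unfolding ptc_def by blast
lemma ptc_B: "ptc a a' \<Longrightarrow> a \<in> B \<Longrightarrow> a' \<in> A"
  unfolding ptc_def by blast

lemma Corr_atom:
  assumes "Corr r D \<alpha> \<beta> \<alpha>' \<beta>'" "x \<in> D" "y \<in> D"
  shows "(\<alpha> x = \<alpha> y \<longleftrightarrow> \<alpha>' x = \<alpha>' y) \<and> (R (\<alpha> x) (\<alpha> y) \<longleftrightarrow> R (\<alpha>' x) (\<alpha>' y)) \<and> (X \<in> N2 \<longrightarrow> (\<alpha> x \<in> \<beta> X \<longleftrightarrow> \<alpha>' x \<in> \<beta>' X))"
proof -
  note pw = CorrD(1)[OF assms(1)]
  have bb: "\<beta> X - A - B = \<beta>' X - A - B" using CorrD(2)[OF assms(1)] by blast
  have a1: "atom (A, inS A \<alpha> D, \<alpha>, \<beta>) (B, inS B \<alpha>' D, \<alpha>', \<beta>')" using CorrD(3)[OF assms(1)] eqv_imp_atom by blast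
  have a2: "atom (B, inS B \<alpha> D, \<alpha>, \<beta>) (A, inS A \<alpha>' D, \<alpha>', \<beta>')" using CorrD(4)[OF assms(1)] eqv_imp_atom by blast
  have px: "ptc (\<alpha> x) (\<alpha>' x)" using pw assms(2) by blast
  have py: "ptc (\<alpha> y) (\<alpha>' y)" using pw assms(3) by blast
  have xA: "\<alpha> x \<in> A \<Longrightarrow> x \<in> inS A \<alpha> D" "\<alpha> x \<in> B \<Longrightarrow> x \<in> inS B \<alpha> D"
    "\<alpha> y \<in> A \<Longrightarrow> y \<in> inS A \<alpha> D" "\<alpha> y \<in> B \<Longrightarrow> y \<in> inS B \<alpha> D"
    using assms(2,3) unfolding inS_def by auto
  have eq: "\<alpha> x = \<alpha> y \<longleftrightarrow> \<alpha>' x = \<alpha>' y"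
  proof -
    consider "\<alpha> x \<in> A" "\<alpha> y \<in> A" | "\<alpha> x \<in> B" "\<alpha> y \<in> B" | "\<not>(\<alpha> x \<in> A \<and> \<alpha> y \<in> A)" "\<not>(\<alpha> x \<in> B \<and> \<alpha> y \<in> B)" by blast
    then show ?thesis
    proof cases
      case 1 then show ?thesis using a1 xA by simp
    next
      case 2 then show ?thesis using a2 xA by simp
    next
      case 3 then show ?thesis using ptc_eq[OF px py] by blast
    qed
  qed
  have rel: "R (\<alpha> x) (\<alpha> y) \<longleftrightarrow> R (\<alpha>' x) (\<alpha>' y)"
  proof -
    consider "\<alpha> x \<in> A" "\<alpha> y \<in> A" | "\<alpha> x \<in> B" "\<alpha> y \<in> B" | "\<alpha> x \<in> A" "\<alpha> y \<in> B"
      | "\<alpha> x \<in> B" "\<alpha> y \<in> A" | "\<alpha> x \<notin> A" "\<alpha> x \<notin> B" "\<alpha> y \<notin> A" "\<alpha> y \<notin> B"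
      | "\<alpha> x \<in> A \<union> B" "\<alpha> y \<notin> A" "\<alpha> y \<notin> B" | "\<alpha> y \<in> A \<union> B" "\<alpha> x \<notin> A" "\<alpha> x \<notin> B" by blast
    then show ?thesis
    proof cases
      case 1 then show ?thesis using a1 xA by simp
    next
      case 2 then show ?thesis using a2 xA by simp
    next
      case 3
      then have "\<alpha>' x \<in> B" "\<alpha>' y \<in> A" using ptc_A[OF px] ptc_B[OF py] by blast+
      then show ?thesis using 3 noR by blast
    next
      case 4
      then have "\<alpha>' x \<in> A" "\<alpha>' y \<in> B" using ptc_B[OF px] ptc_A[OF py] by blast+
      then show ?thesis using 4 noR by blast
    next
      case 5 then show ?thesis using ptc_W[OF px] ptc_W[OF py] by simp
    next
      case 6
      then have w: "\<alpha>' y = \<alpha> y" "\<alpha> y \<in> U" using ptc_W[OF py] by blast+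
      have x': "\<alpha>' x \<in> A \<union> B" using 6 ptc_A[OF px] ptc_B[OF px] by blast
      show ?thesis
      proof (cases "\<alpha> y \<in> set sl")
        case True
        then obtain j where j: "j < length sl" "sl ! j = \<alpha> y" by (auto simp: in_set_conv_nth)
        show ?thesis
        proof (cases "\<alpha> x \<in> A")
          case True
          have h: "R (\<alpha> x) (sl ! j) = R (\<alpha>' x) (sl ! j)" using a1 xA(1)[OF True] j(1) by simp
          then show ?thesis using j(2) w(1) by simp
        next
          case False then have B: "\<alpha> x \<in> B" using 6 by blast
          have h: "R (\<alpha> x) (sl ! j) = R (\<alpha>' x) (sl ! j)" using a2 xA(2)[OF B] j(1) by simp
          then show ?thesis using j(2) w(1) by simp
        qed
      next
        case False
        have "\<not> R (\<alpha> x) (\<alpha> y)" using bdry[of "\<alpha> x" "\<alpha> y"] 6 w False by blast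
        moreover have "\<not> R (\<alpha>' x) (\<alpha>' y)"
          using bdry[of "\<alpha>' x" "\<alpha> y"] 6 x' w False by (metis Un_iff)
        ultimately show ?thesis by simp
      qed
    next
      case 7
      then have w: "\<alpha>' x = \<alpha> x" "\<alpha> x \<in> U" using ptc_W[OF px] by blast+
      have y': "\<alpha>' y \<in> A \<union> B" using 7 ptc_A[OF py] ptc_B[OF py] by blast
      show ?thesis
      proof (cases "\<alpha> x \<in> set sl")
        case True
        then obtain j where j: "j < length sl" "sl ! j = \<alpha> x" by (auto simp: in_set_conv_nth)
        show ?thesis
        proof (cases "\<alpha> y \<in> A")
          case True
          have h: "R (sl ! j) (\<alpha> y) = R (sl ! j) (\<alpha>' y)" using a1 xA(3)[OF True] j(1) by simp
          then show ?thesis using j(2) w(1) by simp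
        next
          case False then have B: "\<alpha> y \<in> B" using 7 by blast
          have h: "R (sl ! j) (\<alpha> y) = R (sl ! j) (\<alpha>' y)" using a2 xA(4)[OF B] j(1) by simp
          then show ?thesis using j(2) w(1) by simp
        qed
      next
        case False
        have "\<not> R (\<alpha> x) (\<alpha> y)" using bdry[of "\<alpha> y" "\<alpha> x"] 7 w False by blast
        moreover have "\<not> R (\<alpha>' x) (\<alpha>' y)"
          using bdry[of "\<alpha>' y" "\<alpha> x"] 7 y' w False by (metis Un_iff)
        ultimately show ?thesis by simp
      qed
    qed
  qed
  have mem: "\<alpha> x \<in> \<beta> X \<longleftrightarrow> \<alpha>' x \<in> \<beta>' X" if X: "X \<in> N2"
  proof -
    consider "\<alpha> x \<in> A" | "\<alpha> x \<in> B" | "\<alpha> x \<notin> A" "\<alpha> x \<notin> B" by blast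
    then show ?thesis
    proof cases
      case 1 then show ?thesis using a1 xA X by simp
    next
      case 2 then show ?thesis using a2 xA X by simp
    next
      case 3 then have w: "\<alpha>' x = \<alpha> x" using ptc_W[OF px] by blast
      have "\<alpha> x \<in> \<beta> X - A - B \<longleftrightarrow> \<alpha> x \<in> \<beta>' X - A - B" using bb by simp
      then show ?thesis using 3 w by simp
    qed
  qed
  show ?thesis using eq rel mem by blast
qed

lemma Corr_le': "r' \<le> r \<Longrightarrow> Corr r D \<alpha> \<beta> \<alpha>' \<beta>' \<Longrightarrow> Corr r' D \<alpha> \<beta> \<alpha>' \<beta>'"
  by (rule CorrI[OF CorrD(1) CorrD(2) eqv_le[OF _ CorrD(3)] eqv_le[OF _ CorrD(4)]])

theorem swap:
  "Corr r D \<alpha> \<beta> \<alpha>' \<beta>' \<Longrightarrow> qr \<phi> \<le> r \<Longrightarrow> fv1 \<phi> \<subseteq> D \<Longrightarrow> allv1 \<phi> \<subseteq> N1 \<Longrightarrow> allv2 \<phi> \<subseteq> N2 \<Longrightarrow>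
   sat U R \<alpha> \<beta> \<phi> = sat U R \<alpha>' \<beta>' \<phi>"
proof (induction \<phi> arbitrary: r D \<alpha> \<beta> \<alpha>' \<beta>')
  case (Eq x y)
  then show ?case using Corr_atom[OF Eq.prems(1), of x y] by simp
next
  case (Mem x X)
  then show ?case using Corr_atom[OF Mem.prems(1), of x x X] by simp
next
  case (Rel x y)
  then show ?case using Corr_atom[OF Rel.prems(1), of x y] by simp
next
  case (Neg \<phi>)
  have "sat U R \<alpha> \<beta> \<phi> = sat U R \<alpha>' \<beta>' \<phi>" by (rule Neg.IH) (use Neg.prems in auto)
  then show ?case by simp
next
  case (Conj \<phi>1 \<phi>2)
  have "sat U R \<alpha> \<beta> \<phi>1 = sat U R \<alpha>' \<beta>' \<phi>1" by (rule Conj.IH(1)) (use Conj.prems in auto)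
  moreover have "sat U R \<alpha> \<beta> \<phi>2 = sat U R \<alpha>' \<beta>' \<phi>2" by (rule Conj.IH(2)) (use Conj.prems in auto)
  ultimately show ?case by simp
next
  case (Disj \<phi>1 \<phi>2)
  have "sat U R \<alpha> \<beta> \<phi>1 = sat U R \<alpha>' \<beta>' \<phi>1" by (rule Disj.IH(1)) (use Disj.prems in auto)
  moreover have "sat U R \<alpha> \<beta> \<phi>2 = sat U R \<alpha>' \<beta>' \<phi>2" by (rule Disj.IH(2)) (use Disj.prems in auto)
  ultimately show ?case by simp
next
  case (Ex1 v \<phi>)
  obtain r' where r: "r = Suc r'" using Ex1.prems(2) by (cases r) auto
  have q: "qr \<phi> \<le> r'" using Ex1.prems(2) r by simp
  have f: "fv1 \<phi> \<subseteq> insert v D" using Ex1.prems(3) by auto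
  have v: "v \<in> N1" and a1: "allv1 \<phi> \<subseteq> N1" and a2: "allv2 \<phi> \<subseteq> N2" using Ex1.prems(4,5) by auto
  have C: "Corr (Suc r') D \<alpha> \<beta> \<alpha>' \<beta>'" using Ex1.prems(1) r by simp
  show ?case
  proof
    assume "sat U R \<alpha> \<beta> (Ex1 v \<phi>)"
    then obtain a where a: "a \<in> U" "sat U R (\<alpha>(v := a)) \<beta> \<phi>" by auto
    obtain a' where a': "a' \<in> U" "Corr r' (insert v D) (\<alpha>(v := a)) \<beta> (\<alpha>'(v := a')) \<beta>'"
      using forth1[OF C v a(1)] by blast
    have "sat U R (\<alpha>'(v := a')) \<beta>' \<phi>" using Ex1.IH[OF a'(2) q f a1 a2] a(2) by blast
    then show "sat U R \<alpha>' \<beta>' (Ex1 v \<phi>)" using a'(1) by auto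
  next
    assume "sat U R \<alpha>' \<beta>' (Ex1 v \<phi>)"
    then obtain a where a: "a \<in> U" "sat U R (\<alpha>'(v := a)) \<beta>' \<phi>" by auto
    obtain a' where a': "a' \<in> U" "Corr r' (insert v D) (\<alpha>'(v := a)) \<beta>' (\<alpha>(v := a')) \<beta>"
      using forth1[OF Corr_sym[OF C] v a(1)] by blast
    have "sat U R (\<alpha>(v := a')) \<beta> \<phi>" using Ex1.IH[OF a'(2) q f a1 a2] a(2) by blast
    then show "sat U R \<alpha> \<beta> (Ex1 v \<phi>)" using a'(1) by auto
  qed
next
  case (All1 v \<phi>)
  obtain r' where r: "r = Suc r'" using All1.prems(2) by (cases r) auto
  have q: "qr \<phi> \<le> r'" using All1.prems(2) r by simp
  have f: "fv1 \<phi> \<subseteq> insert v D" using All1.prems(3) by auto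
  have v: "v \<in> N1" and a1: "allv1 \<phi> \<subseteq> N1" and a2: "allv2 \<phi> \<subseteq> N2" using All1.prems(4,5) by auto
  have C: "Corr (Suc r') D \<alpha> \<beta> \<alpha>' \<beta>'" using All1.prems(1) r by simp
  show ?case
  proof
    assume H: "sat U R \<alpha> \<beta> (All1 v \<phi>)"
    show "sat U R \<alpha>' \<beta>' (All1 v \<phi>)"
    proof (simp only: sat.simps, intro ballI)
      fix a assume a: "a \<in> U"
      obtain a' where a': "a' \<in> U" "Corr r' (insert v D) (\<alpha>'(v := a)) \<beta>' (\<alpha>(v := a')) \<beta>"
        using forth1[OF Corr_sym[OF C] v a] by blast
      have "sat U R (\<alpha>(v := a')) \<beta> \<phi>" using H a'(1) by simp
      then show "sat U R (\<alpha>'(v := a)) \<beta>' \<phi>" using All1.IH[OF a'(2) q f a1 a2] by blast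
    qed
  next
    assume H: "sat U R \<alpha>' \<beta>' (All1 v \<phi>)"
    show "sat U R \<alpha> \<beta> (All1 v \<phi>)"
    proof (simp only: sat.simps, intro ballI)
      fix a assume a: "a \<in> U"
      obtain a' where a': "a' \<in> U" "Corr r' (insert v D) (\<alpha>(v := a)) \<beta> (\<alpha>'(v := a')) \<beta>'"
        using forth1[OF C v a] by blast
      have "sat U R (\<alpha>'(v := a')) \<beta>' \<phi>" using H a'(1) by simp
      then show "sat U R (\<alpha>(v := a)) \<beta> \<phi>" using All1.IH[OF a'(2) q f a1 a2] by blast
    qed
  qed
next
  case (Ex2 X \<phi>)
  obtain r' where r: "r = Suc r'" using Ex2.prems(2) by (cases r) auto
  have q: "qr \<phi> \<le> r'" using Ex2.prems(2) r by simp
  have f: "fv1 \<phi> \<subseteq> D" using Ex2.prems(3) by auto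
  have v: "X \<in> N2" and a1: "allv1 \<phi> \<subseteq> N1" and a2: "allv2 \<phi> \<subseteq> N2" using Ex2.prems(4,5) by auto
  have C: "Corr (Suc r') D \<alpha> \<beta> \<alpha>' \<beta>'" using Ex2.prems(1) r by simp
  show ?case
  proof
    assume "sat U R \<alpha> \<beta> (Ex2 X \<phi>)"
    then obtain T where a: "T \<subseteq> U" "sat U R \<alpha> (\<beta>(X := T)) \<phi>" by auto
    obtain T' where a': "T' \<subseteq> U" "Corr r' D \<alpha> (\<beta>(X := T)) \<alpha>' (\<beta>'(X := T'))"
      using forth2[OF C v a(1)] by blast
    have "sat U R \<alpha>' (\<beta>'(X := T')) \<phi>" using Ex2.IH[OF a'(2) q f a1 a2] a(2) by blast
    then show "sat U R \<alpha>' \<beta>' (Ex2 X \<phi>)" using a'(1) by auto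
  next
    assume "sat U R \<alpha>' \<beta>' (Ex2 X \<phi>)"
    then obtain T where a: "T \<subseteq> U" "sat U R \<alpha>' (\<beta>'(X := T)) \<phi>" by auto
    obtain T' where a': "T' \<subseteq> U" "Corr r' D \<alpha>' (\<beta>'(X := T)) \<alpha> (\<beta>(X := T'))"
      using forth2[OF Corr_sym[OF C] v a(1)] by blast
    have "sat U R \<alpha> (\<beta>(X := T')) \<phi>" using Ex2.IH[OF a'(2) q f a1 a2] a(2) by blast
    then show "sat U R \<alpha> \<beta> (Ex2 X \<phi>)" using a'(1) by auto
  qed
next
  case (All2 X \<phi>)
  obtain r' where r: "r = Suc r'" using All2.prems(2) by (cases r) auto
  have q: "qr \<phi> \<le> r'" using All2.prems(2) r by simp
  have f: "fv1 \<phi> \<subseteq> D" using All2.prems(3) by auto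
  have v: "X \<in> N2" and a1: "allv1 \<phi> \<subseteq> N1" and a2: "allv2 \<phi> \<subseteq> N2" using All2.prems(4,5) by auto
  have C: "Corr (Suc r') D \<alpha> \<beta> \<alpha>' \<beta>'" using All2.prems(1) r by simp
  show ?case
  proof
    assume H: "sat U R \<alpha> \<beta> (All2 X \<phi>)"
    show "sat U R \<alpha>' \<beta>' (All2 X \<phi>)"
    proof (simp only: sat.simps, intro allI impI)
      fix T assume a: "T \<subseteq> U"
      obtain T' where a': "T' \<subseteq> U" "Corr r' D \<alpha>' (\<beta>'(X := T)) \<alpha> (\<beta>(X := T'))"
        using forth2[OF Corr_sym[OF C] v a] by blast
      have "sat U R \<alpha> (\<beta>(X := T')) \<phi>" using H a'(1) by simp
      then show "sat U R \<alpha>' (\<beta>'(X := T)) \<phi>" using All2.IH[OF a'(2) q f a1 a2] by blast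
    qed
  next
    assume H: "sat U R \<alpha>' \<beta>' (All2 X \<phi>)"
    show "sat U R \<alpha> \<beta> (All2 X \<phi>)"
    proof (simp only: sat.simps, intro allI impI)
      fix T assume a: "T \<subseteq> U"
      obtain T' where a': "T' \<subseteq> U" "Corr r' D \<alpha> (\<beta>(X := T)) \<alpha>' (\<beta>'(X := T'))"
        using forth2[OF C v a] by blast
      have "sat U R \<alpha>' (\<beta>'(X := T')) \<phi>" using H a'(1) by simp
      then show "sat U R \<alpha> (\<beta>(X := T)) \<phi>" using All2.IH[OF a'(2) q f a1 a2] by blast
    qed
  qed
qed

end


definition ADD :: recf where "ADD = PrimRec (Proj 0) (Comp Succ [Proj 1])"
definition MUL :: recf where "MUL = PrimRec Zero (Comp ADD [Proj 1, Proj 2])"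

lemma eval_proj0: "eval (Proj 0) (x # xs) x"
  using eval_Proj[of 0 "x # xs"] by simp
lemma eval_proj1: "eval (Proj 1) (x # y # xs) y"
  using eval_Proj[of 1 "x # y # xs"] by simp
lemma eval_proj2: "eval (Proj 2) (x # y # z # xs) z"
  using eval_Proj[of 2 "x # y # z # xs"] by (simp add: numeral_2_eq_2)

lemma eval_comp1: "eval g xs a \<Longrightarrow> eval f [a] z \<Longrightarrow> eval (Comp f [g]) xs z"
  by (rule eval_Comp[of "[a]"]) auto

lemma eval_comp2: "eval g1 xs a \<Longrightarrow> eval g2 xs b \<Longrightarrow> eval f [a, b] z \<Longrightarrow> eval (Comp f [g1, g2]) xs z"
  apply (rule eval_Comp[of "[a, b]"])
    apply simp
   apply (auto simp: less_Suc_eq)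
  done

lemma eval_ADD: "eval ADD [x, y] (x + y)"
proof (induction x)
  case 0
  show ?case unfolding ADD_def by (rule eval_PrimRec0) (simp add: eval_proj0)
next
  case (Suc x)
  show ?case unfolding ADD_def
    apply (rule eval_PrimRecS[of _ _ x "[y]" "x + y"])
     apply (fold ADD_def, rule Suc)
    apply (rule eval_comp1[of _ _ "x + y"])
     apply (rule eval_proj1)
    using eval_Succ[of "x + y" "[]"] by simp
qed

lemma eval_MUL: "eval MUL [x, y] (x * y)"
proof (induction x)
  case 0
  show ?case unfolding MUL_def by (rule eval_PrimRec0) (simp add: eval_Zero)
next
  case (Suc x)
  have "eval (Comp ADD [Proj 1, Proj 2]) [x, x * y, y] (x * y + y)"
    by (rule eval_comp2[OF eval_proj1 eval_proj2 eval_ADD])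
  then show ?case unfolding MUL_def
    apply -
    apply (rule eval_PrimRecS[of _ _ x "[y]" "x * y"])
     apply (fold MUL_def, rule Suc)
    by (simp add: add.commute)
qed

definition addf :: "recf \<Rightarrow> recf \<Rightarrow> recf" where "addf a b = Comp ADD [a, b]"
definition mulf :: "recf \<Rightarrow> recf \<Rightarrow> recf" where "mulf a b = Comp MUL [a, b]"
fun cnst :: "nat \<Rightarrow> recf" where
  "cnst 0 = Zero" | "cnst (Suc c) = Comp Succ [cnst c]"

lemma eval_addf: "eval a xs x \<Longrightarrow> eval b xs y \<Longrightarrow> eval (addf a b) xs (x + y)"
  unfolding addf_def by (rule eval_comp2[OF _ _ eval_ADD])
lemma eval_mulf: "eval a xs x \<Longrightarrow> eval b xs y \<Longrightarrow> eval (mulf a b) xs (x * y)"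
  unfolding mulf_def by (rule eval_comp2[OF _ _ eval_MUL])
lemma eval_cnst: "eval (cnst c) xs c"
proof (induction c)
  case 0 then show ?case by (simp add: eval_Zero)
next
  case (Suc c)
  then show ?case using eval_Succ[of c "[]"] by (auto intro: eval_comp1)
qed

definition gfun :: "nat \<Rightarrow> nat \<Rightarrow> nat" where
  "gfun n m = ((m + 2) + (m + 2) * (m + 2) + (m + 2) * (m + 2) + (m + 2) * (n + m + 2))
      + ((m + 2) + (m + 2)) + 3 + (m + 2) * (((m + 2) + (m + 2) + (n + m + 2)) + 3)"

lemma computable_gfun: "computable2 gfun"
proof -
  let ?M = "addf (Proj 1) (cnst 2)"
  let ?N = "addf (addf (Proj 0) (Proj 1)) (cnst 2)"
  let ?t = "addf (addf (addf (addf (addf (addf ?M (mulf ?M ?M)) (mulf ?M ?M)) (mulf ?M ?N))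
      (addf ?M ?M)) (cnst 3)) (mulf ?M (addf (addf (addf ?M ?M) ?N) (cnst 3)))"
  have "\<forall>n m. eval ?t [n, m] (gfun n m)"
    unfolding gfun_def
    by (intro allI eval_addf eval_mulf eval_cnst eval_proj0 eval_proj1)
  then show ?thesis unfolding computable2_def by blast
qed

abbreviation tw :: "nat \<Rightarrow> nat \<Rightarrow> nat" where "tw k j \<equiv> exp_tower j k"

lemma le_2pow: "x \<le> 2 ^ x" for x :: nat
  using less_exp[of x] by simp

lemma dbl_le_2pow: "2 * x \<le> 2 ^ x" for x :: nat
proof (induction x)
  case 0 then show ?case by simp
next
  case (Suc x)
  show ?case
  proof (cases "x = 0")
    case True then show ?thesis by simp
  next
    case False
    then have "2 \<le> (2::nat) ^ x" using le_2pow[of x]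
      by (metis One_nat_def Suc_leI neq0_conv one_less_power order_less_imp_le
            power_one_right self_le_power zero_less_numeral one_less_numeral_iff semiring_norm(76))
    then show ?thesis using Suc by simp
  qed
qed

lemma t_mono: "j \<le> j' \<Longrightarrow> tw k j \<le> tw k j'"
proof (induction j' rule: dec_induct)
  case base then show ?case by simp
next
  case (step i)
  then show ?case using le_2pow[of "tw k i"] by (simp del: exp_tower.simps) (metis exp_tower.simps(2) order_trans le_2pow)
qed

lemma t_k: "k \<le> tw k j"
  using t_mono[of 0 j k] by simp

lemma t_plus: "x \<le> tw k j \<Longrightarrow> x + c \<le> tw k (j + c)"
proof (induction c)
  case 0 then show ?case by simp
next
  case (Suc c)
  then have "x + c < 2 ^ tw k (j + c)" using less_exp[of "tw k (j + c)"] by linarith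
  then show ?case by simp
qed

lemma t_dbl: "x \<le> tw k j \<Longrightarrow> 2 * x \<le> tw k (Suc j)"
  using dbl_le_2pow[of "tw k j"] by simp

lemma t_exp: "x \<le> tw k j \<Longrightarrow> 2 ^ x \<le> tw k (Suc j)"
  by (simp add: power_increasing)

lemma t_pow2mul: "x \<le> tw k j \<Longrightarrow> 2 ^ c * x \<le> tw k (j + c)"
proof (induction c)
  case 0 then show ?case by simp
next
  case (Suc c)
  then have "2 * (2 ^ c * x) \<le> tw k (Suc (j + c))" using t_dbl by blast
  then show ?case by (simp add: mult.assoc)
qed

lemma t_mul: "x \<le> tw k j \<Longrightarrow> c * x \<le> tw k (j + c)"
proof -
  assume a: "x \<le> tw k j"
  have "c * x \<le> 2 ^ c * x" using le_2pow[of c] by simp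
  also have "\<dots> \<le> tw k (j + c)" using t_pow2mul[OF a] .
  finally show ?thesis .
qed

lemma t_sq: "x \<le> tw k j \<Longrightarrow> x * x \<le> tw k (j + 2)"
proof -
  assume a: "x \<le> tw k j"
  have "x * x \<le> 2 ^ x * 2 ^ x" using le_2pow[of x] by (simp add: mult_le_mono)
  also have "\<dots> = 2 ^ (2 * x)" by (simp add: power_add[symmetric] mult_2)
  also have "\<dots> \<le> tw k (j + 2)" using t_exp[OF t_dbl[OF a]] by simp
  finally show ?thesis .
qed

fun Tb :: "nat \<Rightarrow> nat \<Rightarrow> nat \<Rightarrow> nat \<Rightarrow> nat" where
  "Tb c1 c2 K 0 = 2 ^ (c1 + c1 * c1 + c1 * c1 + c1 * c2 + c1 * K + c1 * K)"
| "Tb c1 c2 K (Suc r) = Tb c1 c2 K r * 2 ^ (c1 * Tb c1 c2 K r) * 2 ^ (c1 * Tb c1 c2 K r) * 2 ^ (c2 * Tb c1 c2 K r)"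

lemma Tb_step_mono: "x \<le> y \<Longrightarrow> x * 2 ^ (c1 * x) * 2 ^ (c1 * x) * 2 ^ (c2 * x) \<le> y * 2 ^ (c1 * y) * 2 ^ (c1 * y) * 2 ^ (c2 * y)"
  for x y :: nat
  by (intro mult_le_mono power_increasing) auto

lemma Tb_mono_K: "K \<le> K' \<Longrightarrow> Tb c1 c2 K r \<le> Tb c1 c2 K' r"
  by (induction r) (auto intro!: power_increasing Tb_step_mono add_le_mono mult_le_mono2 simp del: power_Suc)

lemma Tb_bound: "Tb c1 c2 k r \<le> tw k ((c1 + c1 * c1 + c1 * c1 + c1 * c2) + (c1 + c1) + 1 + r * ((c1 + c1 + c2) + 3))"
proof (induction r)
  case 0
  let ?a = "c1 + c1 * c1 + c1 * c1 + c1 * c2"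
  have "(c1 + c1) * k \<le> tw k (0 + (c1 + c1))" by (rule t_mul) simp
  then have "(c1 + c1) * k + ?a \<le> tw k ((c1 + c1) + ?a)" using t_plus by simp
  then have "2 ^ ((c1 + c1) * k + ?a) \<le> tw k (Suc ((c1 + c1) + ?a))" by (rule t_exp)
  then show ?case by (simp add: algebra_simps)
next
  case (Suc r)
  define j where "j = (c1 + c1 * c1 + c1 * c1 + c1 * c2) + (c1 + c1) + 1 + r * ((c1 + c1 + c2) + 3)"
  define d where "d = c1 + c1 + c2"
  define x where "x = Tb c1 c2 k r"
  have x: "x \<le> tw k j" using Suc unfolding x_def j_def by simp
  have "d * x \<le> tw k (j + d)" by (rule t_mul[OF x])
  then have e: "2 ^ (d * x) \<le> tw k (j + d + 1)" using t_exp by simp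
  have x2: "x \<le> tw k (j + d + 1)" using x t_mono[of j "j + d + 1" k] by simp
  have "Tb c1 c2 k (Suc r) = x * 2 ^ (d * x)"
    by (simp add: x_def d_def power_add[symmetric] algebra_simps)
  also have "\<dots> \<le> tw k (j + d + 1) * tw k (j + d + 1)" using e x2 by (simp add: mult_le_mono)
  also have "\<dots> \<le> tw k (j + d + 1 + 2)" by (rule t_sq) simp
  finally have calc: "Tb c1 c2 k (Suc r) \<le> tw k (j + d + 1 + 2)" .
  have idx: "j + d + 1 + 2 = (c1 + c1 * c1 + c1 * c1 + c1 * c2) + (c1 + c1) + 1 + Suc r * ((c1 + c1 + c2) + 3)"
    by (simp add: j_def d_def algebra_simps)
  show ?case using calc by (simp only: idx)
qed

lemma f_bound: "(Tb (m + 2) (n + m + 2) k (m + 2))\<^sup>2 \<le> exp_tower (gfun n m) k"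
proof -
  let ?x = "Tb (m + 2) (n + m + 2) k (m + 2)"
  have "?x * ?x \<le> tw k (((m + 2) + (m + 2) * (m + 2) + (m + 2) * (m + 2) + (m + 2) * (n + m + 2))
      + ((m + 2) + (m + 2)) + 1 + (m + 2) * (((m + 2) + (m + 2) + (n + m + 2)) + 3) + 2)"
    by (rule t_sq[OF Tb_bound])
  then show ?thesis by (simp add: power2_eq_square gfun_def algebra_simps)
qed


lemma card_le_img:
  assumes fin: "finite (g ` P)" and eq: "\<And>p q. p \<in> P \<Longrightarrow> q \<in> P \<Longrightarrow> g p = g q \<Longrightarrow> f p = f q"
  shows "finite (f ` P) \<and> card (f ` P) \<le> card (g ` P)"
proof -
  define h where "h y = f (SOME p. p \<in> P \<and> g p = y)" for y
  have "f p = h (g p)" if p: "p \<in> P" for p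
  proof -
    have "\<exists>p'. p' \<in> P \<and> g p' = g p" using p by blast
    then have "(SOME p'. p' \<in> P \<and> g p' = g p) \<in> P \<and> g (SOME p'. p' \<in> P \<and> g p' = g p) = g p"
      by (rule someI_ex)
    then show ?thesis unfolding h_def using eq p by metis
  qed
  then have "f ` P = h ` (g ` P)" by (auto simp: image_iff)
  then show ?thesis using fin card_image_le by simp
qed

lemma fst_snd_moves:
  "fst (snd (rem v p)) = fst (snd p) - {v}" "fst (snd (add v a p)) = insert v (fst (snd p))"
  "fst (snd (setm X S p)) = fst (snd p)"
  by (cases p; auto)+

context gm begin

definition cls :: "nat \<Rightarrow> 'a pos \<Rightarrow> 'a pos set" where
  "cls r p = {q. eqv r p q}"

lemma cls_eq_iff: "cls r p = cls r q \<longleftrightarrow> eqv r p q"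
proof
  assume "cls r p = cls r q"
  then have "q \<in> cls r p" using eqv_refl unfolding cls_def by blast
  then show "eqv r p q" unfolding cls_def by simp
next
  assume e: "eqv r p q"
  show "cls r p = cls r q"
    unfolding cls_def using e eqv_sym eqv_trans by blast
qed

definition Pos :: "'a set set \<Rightarrow> 'a pos set" where
  "Pos Blks = {p. fst p \<in> Blks \<and> fst (snd p) \<subseteq> N1}"

fun aprof :: "'a pos \<Rightarrow> nat set \<times> (nat \<times> nat) set \<times> (nat \<times> nat) set \<times> (nat \<times> nat) set \<times> (nat \<times> nat) set \<times> (nat \<times> nat) set" where
  "aprof (A, F, \<alpha>, \<beta>) = (F, {(x, y). x \<in> F \<and> y \<in> F \<and> \<alpha> x = \<alpha> y}, {(x, y). x \<in> F \<and> y \<in> F \<and> R (\<alpha> x) (\<alpha> y)},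
     {(x, X). x \<in> F \<and> X \<in> N2 \<and> \<alpha> x \<in> \<beta> X}, {(x, j). x \<in> F \<and> j < length sl \<and> R (\<alpha> x) (sl ! j)},
     {(x, j). x \<in> F \<and> j < length sl \<and> R (sl ! j) (\<alpha> x)})"

lemma aprof_atom: "aprof p = aprof q \<Longrightarrow> atom p q"
proof -
  obtain A F \<alpha> \<beta> where p: "p = (A, F, \<alpha>, \<beta>)" by (cases p) auto
  obtain B F' \<alpha>' \<beta>' where q: "q = (B, F', \<alpha>', \<beta>')" by (cases q) auto
  assume H0: "aprof p = aprof q"
  have F: "F' = F" using H0 unfolding p q by simp
  have H2: "aprof (A, F, \<alpha>, \<beta>) = aprof (B, F, \<alpha>', \<beta>')" using H0 F unfolding p q by simp
  then have
    e1: "{(x, y). x \<in> F \<and> y \<in> F \<and> \<alpha> x = \<alpha> y} = {(x, y). x \<in> F \<and> y \<in> F \<and> \<alpha>' x = \<alpha>' y}" and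
    e2: "{(x, y). x \<in> F \<and> y \<in> F \<and> R (\<alpha> x) (\<alpha> y)} = {(x, y). x \<in> F \<and> y \<in> F \<and> R (\<alpha>' x) (\<alpha>' y)}" and
    e3: "{(x, X). x \<in> F \<and> X \<in> N2 \<and> \<alpha> x \<in> \<beta> X} = {(x, X). x \<in> F \<and> X \<in> N2 \<and> \<alpha>' x \<in> \<beta>' X}" and
    e4: "{(x, j). x \<in> F \<and> j < length sl \<and> R (\<alpha> x) (sl ! j)} = {(x, j). x \<in> F \<and> j < length sl \<and> R (\<alpha>' x) (sl ! j)}" and
    e5: "{(x, j). x \<in> F \<and> j < length sl \<and> R (sl ! j) (\<alpha> x)} = {(x, j). x \<in> F \<and> j < length sl \<and> R (sl ! j) (\<alpha>' x)}"
    by (simp_all only: aprof.simps prod.inject)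
  have c1: "\<forall>x\<in>F. \<forall>y\<in>F. (\<alpha> x = \<alpha> y \<longleftrightarrow> \<alpha>' x = \<alpha>' y) \<and> (R (\<alpha> x) (\<alpha> y) \<longleftrightarrow> R (\<alpha>' x) (\<alpha>' y))"
  proof (intro ballI conjI)
    fix x y assume "x \<in> F" "y \<in> F"
    then show "\<alpha> x = \<alpha> y \<longleftrightarrow> \<alpha>' x = \<alpha>' y" using e1 by (simp add: set_eq_iff) (metis (mono_tags, lifting) case_prod_conv)
    show "R (\<alpha> x) (\<alpha> y) \<longleftrightarrow> R (\<alpha>' x) (\<alpha>' y)" using e2 \<open>x \<in> F\<close> \<open>y \<in> F\<close> by (simp add: set_eq_iff) (metis (mono_tags, lifting) case_prod_conv)
  qed
  have c2: "\<forall>x\<in>F. \<forall>X\<in>N2. (\<alpha> x \<in> \<beta> X \<longleftrightarrow> \<alpha>' x \<in> \<beta>' X)"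
  proof (intro ballI)
    fix x X assume "x \<in> F" "X \<in> N2"
    then show "\<alpha> x \<in> \<beta> X \<longleftrightarrow> \<alpha>' x \<in> \<beta>' X" using e3 by (simp add: set_eq_iff) (metis (mono_tags, lifting) case_prod_conv)
  qed
  have c3: "\<forall>x\<in>F. \<forall>j<length sl. (R (\<alpha> x) (sl ! j) \<longleftrightarrow> R (\<alpha>' x) (sl ! j)) \<and> (R (sl ! j) (\<alpha> x) \<longleftrightarrow> R (sl ! j) (\<alpha>' x))"
  proof (intro ballI allI impI conjI)
    fix x j assume "x \<in> F" "j < length sl"
    then show "R (\<alpha> x) (sl ! j) \<longleftrightarrow> R (\<alpha>' x) (sl ! j)" using e4 by (simp add: set_eq_iff) (metis (mono_tags, lifting) case_prod_conv)
    show "R (sl ! j) (\<alpha> x) \<longleftrightarrow> R (sl ! j) (\<alpha>' x)" using e5 \<open>x \<in> F\<close> \<open>j < length sl\<close> by (simp add: set_eq_iff) (metis (mono_tags, lifting) case_prod_conv)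
  qed
  show "atom p q" unfolding p q using F c1 c2 c3 by simp
qed

lemma card_cls0:
  assumes f1: "finite N1" and f2: "finite N2"
  shows "finite (cls 0 ` Pos Blks) \<and> card (cls 0 ` Pos Blks) \<le> Tb (card N1) (card N2) (length sl) 0"
proof -
  define L where "L = length sl"
  define Cod where "Cod = Pow N1 \<times> Pow (N1 \<times> N1) \<times> Pow (N1 \<times> N1) \<times> Pow (N1 \<times> N2) \<times> Pow (N1 \<times> {..<L}) \<times> Pow (N1 \<times> {..<L})"
  have sub: "aprof ` Pos Blks \<subseteq> Cod"
  proof
    fix z assume "z \<in> aprof ` Pos Blks"
    then obtain p where p: "p \<in> Pos Blks" "z = aprof p" by blast
    obtain A F \<alpha> \<beta> where pp: "p = (A, F, \<alpha>, \<beta>)" by (cases p) auto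
    have F: "F \<subseteq> N1" using p(1) pp unfolding Pos_def by simp
    show "z \<in> Cod" unfolding p(2) pp Cod_def L_def using F by auto
  qed
  have finCod: "finite Cod" unfolding Cod_def using f1 f2 by simp
  have cardCod: "card Cod = Tb (card N1) (card N2) (length sl) 0"
    unfolding Cod_def L_def using f1 f2
    by (simp add: card_cartesian_product card_Pow power_add)
  have fin: "finite (aprof ` Pos Blks)" using finite_subset[OF sub finCod] .
  have "finite (cls 0 ` Pos Blks) \<and> card (cls 0 ` Pos Blks) \<le> card (aprof ` Pos Blks)"
  proof (rule card_le_img[OF fin])
    fix p q assume "aprof p = aprof q"
    then have "eqv 0 p q" using aprof_atom by simp
    then show "cls 0 p = cls 0 q" using cls_eq_iff by blast
  qed
  moreover have "card (aprof ` Pos Blks) \<le> card Cod" by (rule card_mono[OF finCod sub])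
  ultimately show ?thesis using cardCod by simp
qed

definition prof :: "nat \<Rightarrow> 'a pos \<Rightarrow> 'a pos set \<times> (nat \<times> 'a pos set) set \<times> (nat \<times> 'a pos set) set \<times> (nat \<times> 'a pos set) set" where
  "prof r p = (cls r p, {(v, cls r (rem v p)) | v. v \<in> N1}, {(v, cls r (add v a p)) | v a. v \<in> N1 \<and> a \<in> fst p},
     {(X, cls r (setm X S p)) | X S. X \<in> N2 \<and> S \<subseteq> fst p})"

lemma prof_eqv:
  assumes "prof r p = prof r q"
  shows "eqv (Suc r) p q"
proof -
  have e1: "cls r p = cls r q" and
    e2: "{(v, cls r (rem v p)) | v. v \<in> N1} = {(v, cls r (rem v q)) | v. v \<in> N1}" and
    e3: "{(v, cls r (add v a p)) | v a. v \<in> N1 \<and> a \<in> fst p} = {(v, cls r (add v a q)) | v a. v \<in> N1 \<and> a \<in> fst q}" and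
    e4: "{(X, cls r (setm X S p)) | X S. X \<in> N2 \<and> S \<subseteq> fst p} = {(X, cls r (setm X S q)) | X S. X \<in> N2 \<and> S \<subseteq> fst q}"
    using assms unfolding prof_def by (simp_all only: prod.inject)
  show ?thesis
  proof (rule eqvSucI)
    show "eqv r p q" using e1 cls_eq_iff by blast
  next
    fix v assume v: "v \<in> N1"
    have "(v, cls r (rem v p)) \<in> {(v, cls r (rem v q)) | v. v \<in> N1}" by (subst e2[symmetric]) (use v in blast)
    then have "cls r (rem v p) = cls r (rem v q)" by auto
    then show "eqv r (rem v p) (rem v q)" using cls_eq_iff by blast
  next
    fix v a assume v: "v \<in> N1" and a: "a \<in> fst p"
    have "(v, cls r (add v a p)) \<in> {(v, cls r (add v a q)) | v a. v \<in> N1 \<and> a \<in> fst q}" by (subst e3[symmetric]) (use v a in blast)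
    then obtain b where "b \<in> fst q" "cls r (add v a p) = cls r (add v b q)" by auto
    then show "\<exists>b\<in>fst q. eqv r (add v a p) (add v b q)" using cls_eq_iff by blast
  next
    fix v b assume v: "v \<in> N1" and b: "b \<in> fst q"
    have "(v, cls r (add v b q)) \<in> {(v, cls r (add v a p)) | v a. v \<in> N1 \<and> a \<in> fst p}" by (subst e3) (use v b in blast)
    then obtain a where "a \<in> fst p" "cls r (add v b q) = cls r (add v a p)" by auto
    then show "\<exists>a\<in>fst p. eqv r (add v a p) (add v b q)" using cls_eq_iff by metis
  next
    fix X S assume v: "X \<in> N2" and a: "S \<subseteq> fst p"
    have "(X, cls r (setm X S p)) \<in> {(X, cls r (setm X S q)) | X S. X \<in> N2 \<and> S \<subseteq> fst q}" by (subst e4[symmetric]) (use v a in blast)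
    then obtain T where "T \<subseteq> fst q" "cls r (setm X S p) = cls r (setm X T q)" by auto
    then show "\<exists>T. T \<subseteq> fst q \<and> eqv r (setm X S p) (setm X T q)" using cls_eq_iff by blast
  next
    fix X T assume v: "X \<in> N2" and b: "T \<subseteq> fst q"
    have "(X, cls r (setm X T q)) \<in> {(X, cls r (setm X S p)) | X S. X \<in> N2 \<and> S \<subseteq> fst p}" by (subst e4) (use v b in blast)
    then obtain S where "S \<subseteq> fst p" "cls r (setm X T q) = cls r (setm X S p)" by auto
    then show "\<exists>S. S \<subseteq> fst p \<and> eqv r (setm X S p) (setm X T q)" using cls_eq_iff by metis
  qed
qed

lemma card_clsS:
  assumes f1: "finite N1" and f2: "finite N2" and fin: "finite (cls r ` Pos Blks)"
  shows "finite (cls (Suc r) ` Pos Blks) \<and> card (cls (Suc r) ` Pos Blks) \<le>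
     card (cls r ` Pos Blks) * 2 ^ (card N1 * card (cls r ` Pos Blks)) * 2 ^ (card N1 * card (cls r ` Pos Blks)) * 2 ^ (card N2 * card (cls r ` Pos Blks))"
proof -
  define C where "C = cls r ` Pos Blks"
  define Cod where "Cod = C \<times> Pow (N1 \<times> C) \<times> Pow (N1 \<times> C) \<times> Pow (N2 \<times> C)"
  have inPos: "rem v p \<in> Pos Blks" "v \<in> N1 \<Longrightarrow> add v a p \<in> Pos Blks" "setm X S p \<in> Pos Blks" if "p \<in> Pos Blks" for p v a X S
    using that unfolding Pos_def by (auto simp: fst_snd_moves)
  have sub: "prof r ` Pos Blks \<subseteq> Cod"
  proof
    fix z assume "z \<in> prof r ` Pos Blks"
    then obtain p where p: "p \<in> Pos Blks" "z = prof r p" by blast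
    show "z \<in> Cod" unfolding p(2) prof_def Cod_def C_def using p(1) inPos[OF p(1)] by blast
  qed
  have finCod: "finite Cod" unfolding Cod_def using f1 f2 fin C_def by simp
  have cardCod: "card Cod = card C * 2 ^ (card N1 * card C) * 2 ^ (card N1 * card C) * 2 ^ (card N2 * card C)"
    unfolding Cod_def using f1 f2 fin C_def
    by (simp add: card_cartesian_product card_Pow mult.assoc)
  have fin2: "finite (prof r ` Pos Blks)" using finite_subset[OF sub finCod] .
  have "finite (cls (Suc r) ` Pos Blks) \<and> card (cls (Suc r) ` Pos Blks) \<le> card (prof r ` Pos Blks)"
  proof (rule card_le_img[OF fin2])
    fix p q assume "prof r p = prof r q"
    then have "eqv (Suc r) p q" by (rule prof_eqv)
    then show "cls (Suc r) p = cls (Suc r) q" using cls_eq_iff by blast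
  qed
  moreover have "card (prof r ` Pos Blks) \<le> card Cod" by (rule card_mono[OF finCod sub])
  ultimately show ?thesis using cardCod C_def by simp
qed

lemma card_cls:
  assumes f1: "finite N1" and f2: "finite N2"
  shows "finite (cls r ` Pos Blks) \<and> card (cls r ` Pos Blks) \<le> Tb (card N1) (card N2) (length sl) r"
proof (induction r)
  case 0 then show ?case using card_cls0[OF f1 f2] by simp
next
  case (Suc r)
  have A: "finite (cls (Suc r) ` Pos Blks)" and B: "card (cls (Suc r) ` Pos Blks) \<le>
     card (cls r ` Pos Blks) * 2 ^ (card N1 * card (cls r ` Pos Blks)) * 2 ^ (card N1 * card (cls r ` Pos Blks)) * 2 ^ (card N2 * card (cls r ` Pos Blks))"
    using card_clsS[OF f1 f2] Suc by blast+
  have "card (cls r ` Pos Blks) * 2 ^ (card N1 * card (cls r ` Pos Blks)) * 2 ^ (card N1 * card (cls r ` Pos Blks)) * 2 ^ (card N2 * card (cls r ` Pos Blks))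
     \<le> Tb (card N1) (card N2) (length sl) (Suc r)"
    unfolding Tb.simps by (rule Tb_step_mono) (use Suc in blast)
  then show ?case using A B by linarith
qed

end


definition comp :: "nat set \<Rightarrow> nat set set \<Rightarrow> nat set \<Rightarrow> nat \<Rightarrow> nat set" where
  "comp V E S v = {w \<in> V - S. (v, w) \<in> (adj_minus V E S)\<^sup>*}"

lemma comps_eq: "components_minus V E S = comp V E S ` (V - S)"
  unfolding components_minus_def comp_def by simp

lemma adj_sym: "sym (adj_minus V E S)"
  unfolding adj_minus_def sym_def by (auto simp: insert_commute)

lemma adj_sub: "(u, w) \<in> adj_minus V E S \<Longrightarrow> u \<in> V - S \<and> w \<in> V - S \<and> {u, w} \<in> E"
  unfolding adj_minus_def by auto

lemma comp_sub: "comp V E S v \<subseteq> V - S"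
  unfolding comp_def by auto

lemma comp_self: "v \<in> V - S \<Longrightarrow> v \<in> comp V E S v"
  unfolding comp_def by auto

lemma comp_overlap:
  assumes "C1 \<in> components_minus V E S" "C2 \<in> components_minus V E S" "x \<in> C1" "x \<in> C2"
  shows "C1 = C2"
proof -
  obtain v1 where v1: "v1 \<in> V - S" "C1 = comp V E S v1" using assms(1) comps_eq by blast
  obtain v2 where v2: "v2 \<in> V - S" "C2 = comp V E S v2" using assms(2) comps_eq by blast
  let ?r = "(adj_minus V E S)\<^sup>*"
  have s: "sym ?r" using sym_rtrancl[OF adj_sym] .
  have "(v1, x) \<in> ?r" "(v2, x) \<in> ?r" using assms(3,4) v1 v2 unfolding comp_def by auto
  then have "(v1, v2) \<in> ?r" using s by (meson rtrancl_trans symD)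
  then have "(v2, v1) \<in> ?r" using s by (meson symD)
  have "comp V E S v1 = comp V E S v2"
    unfolding comp_def using \<open>(v1, v2) \<in> ?r\<close> \<open>(v2, v1) \<in> ?r\<close> by (auto intro: rtrancl_trans)
  then show ?thesis using v1 v2 by simp
qed

lemma comp_closed:
  assumes "C \<in> components_minus V E S" "u \<in> C" "w \<in> V - S" "{u, w} \<in> E"
  shows "w \<in> C"
proof -
  obtain v where v: "v \<in> V - S" "C = comp V E S v" using assms(1) comps_eq by blast
  have u: "u \<in> V - S" "(v, u) \<in> (adj_minus V E S)\<^sup>*" using assms(2) v unfolding comp_def by auto
  have "(u, w) \<in> adj_minus V E S" unfolding adj_minus_def using u assms(3,4) by auto
  then have "(v, w) \<in> (adj_minus V E S)\<^sup>*" using u(2) by (rule rtrancl_into_rtrancl[rotated])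
  then show ?thesis using v assms(3) unfolding comp_def by auto
qed

lemma two_elem: "p \<noteq> q \<Longrightarrow> e = {p, q} \<Longrightarrow> c1 \<in> e \<Longrightarrow> c2 \<in> e \<Longrightarrow> c1 \<noteq> c2 \<Longrightarrow> e = {c1, c2}"
  by auto

definition blk :: "nat set set \<Rightarrow> nat set \<Rightarrow> inc_elem set" where
  "blk E C = VElem ` C \<union> EElem ` {e \<in> E. e \<inter> C \<noteq> {}}"

lemma blk_R1:
  assumes "inc_rel V E x y" "x \<in> blk E C"
  shows "y \<in> blk E C"
  using assms unfolding inc_rel_def blk_def by auto

lemma blk_R2:
  assumes g: "graph V E" and C: "C \<in> components_minus V E S" and R: "inc_rel V E x y" and y: "y \<in> blk E C"
  shows "x \<in> blk E C \<or> x \<in> VElem ` S"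
proof -
  obtain u e where ue: "x = VElem u" "y = EElem e" "u \<in> V" "e \<in> E" "u \<in> e" using R unfolding inc_rel_def by auto
  obtain c where c: "c \<in> e" "c \<in> C" using y ue unfolding blk_def by auto
  show ?thesis
  proof (cases "u \<in> S")
    case True then show ?thesis using ue by auto
  next
    case False
    show ?thesis
    proof (cases "u = c")
      case True then show ?thesis using ue c unfolding blk_def by auto
    next
      case False
      obtain p q where pq: "p \<noteq> q" "e = {p, q}" using g ue(4) unfolding graph_def by blast
      then have "e = {c, u}" using c(1) ue(5) False by auto
      then have "u \<in> C" using comp_closed[OF C c(2), of u] ue \<open>u \<notin> S\<close> by auto
      then show ?thesis using ue unfolding blk_def by auto
    qed
  qed
qed

lemma blk_S: "C \<in> components_minus V E S \<Longrightarrow> VElem ` S \<inter> blk E C = {}"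
  using comp_sub comps_eq unfolding blk_def by fastforce

lemma blk_disj:
  assumes g: "graph V E" and C1: "C1 \<in> components_minus V E S" and C2: "C2 \<in> components_minus V E S" and ne: "C1 \<noteq> C2"
  shows "blk E C1 \<inter> blk E C2 = {}"
proof -
  have d: "C1 \<inter> C2 = {}" using comp_overlap[OF C1 C2] ne by blast
  have "e \<notin> E \<or> e \<inter> C1 = {} \<or> e \<inter> C2 = {}" for e
  proof (rule ccontr)
    assume "\<not> ?thesis"
    then obtain c1 c2 where e: "e \<in> E" "c1 \<in> e" "c1 \<in> C1" "c2 \<in> e" "c2 \<in> C2" by blast
    have ne': "c1 \<noteq> c2" using d e by blast
    obtain p q where pq: "p \<noteq> q" "e = {p, q}" using g e(1) unfolding graph_def by blast
    then have "e = {c1, c2}" using two_elem[OF pq(1) pq(2) e(2) e(4) ne'] by blast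
    moreover have "c2 \<in> V - S" using e(5) C2 comp_sub[of V E S] comps_eq[of V E S] by auto
    ultimately have "c2 \<in> C1" using comp_closed[OF C1 e(3)] e(1) by simp
    then show False using d e by blast
  qed
  note ee = this
  show ?thesis
  proof (rule equals0I)
    fix z assume z: "z \<in> blk E C1 \<inter> blk E C2"
    show False
    proof (cases z)
      case (VElem c)
      then have "c \<in> C1" "c \<in> C2" using z unfolding blk_def by auto
      then show False using d by blast
    next
      case (EElem e)
      then have "e \<in> E" "e \<inter> C1 \<noteq> {}" "e \<inter> C2 \<noteq> {}" using z unfolding blk_def by auto
      then show False using ee[of e] by blast
    qed
  qed
qed

lemma blk_U: "C \<in> components_minus V E S \<Longrightarrow> blk E C \<subseteq> inc_univ V E"
  using comp_sub comps_eq unfolding blk_def inc_univ_def by fastforce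

lemma blk_ne: "C \<in> components_minus V E S \<Longrightarrow> blk E C \<noteq> {}"
  using comp_self comps_eq unfolding blk_def by fastforce

lemma blk_swp:
  assumes g: "graph V E" and C1: "C1 \<in> components_minus V E S" and C2: "C2 \<in> components_minus V E S" and ne: "C1 \<noteq> C2"
    and sl: "set sl = VElem ` S"
  shows "swp (inc_rel V E) sl (inc_univ V E) (blk E C1) (blk E C2)"
proof (rule swp.intro)
  show "blk E C1 \<subseteq> inc_univ V E" "blk E C2 \<subseteq> inc_univ V E" using blk_U C1 C2 by auto
  have d: "blk E C1 \<inter> blk E C2 = {}" by (rule blk_disj[OF g C1 C2 ne])
  then show "blk E C1 \<inter> blk E C2 = {}" .
  show "\<not> inc_rel V E a b \<and> \<not> inc_rel V E b a" if "a \<in> blk E C1" "b \<in> blk E C2" for a b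
  proof
    show "\<not> inc_rel V E a b" using blk_R1[of V E a b C1] that d by blast
    show "\<not> inc_rel V E b a" using blk_R2[OF g C1, of b a] that d blk_S[OF C2] by blast
  qed
  show "w \<in> set sl" if "a \<in> blk E C1 \<union> blk E C2" "w \<in> inc_univ V E" "w \<notin> blk E C1" "w \<notin> blk E C2"
    "inc_rel V E a w \<or> inc_rel V E w a" for a w
  proof -
    have "w \<in> VElem ` S"
    proof (cases "a \<in> blk E C1")
      case True then show ?thesis using that blk_R1[of V E a w C1] blk_R2[OF g C1, of w a] by blast
    next
      case False then have "a \<in> blk E C2" using that by blast
      then show ?thesis using that blk_R1[of V E a w C2] blk_R2[OF g C2, of w a] by blast
    qed
    then show ?thesis using sl by simp
  qed
qed


lemma lin_min:
  assumes lin: "linear_order_on U r"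
  shows "finite X \<Longrightarrow> X \<noteq> {} \<Longrightarrow> X \<subseteq> U \<Longrightarrow> \<exists>z\<in>X. \<forall>w\<in>X. (z, w) \<in> r"
proof (induction X rule: finite_ne_induct)
  case (singleton x)
  have "refl_on U r" using lin unfolding linear_order_on_def partial_order_on_def preorder_on_def by blast
  then show ?case using singleton unfolding refl_on_def by auto
next
  case (insert x F)
  have refl: "refl_on U r" and tr: "trans r" and tot: "total_on U r"
    using lin unfolding linear_order_on_def partial_order_on_def preorder_on_def by blast+
  obtain z where z: "z \<in> F" "\<forall>w\<in>F. (z, w) \<in> r" using insert by blast
  have xU: "x \<in> U" and zU: "z \<in> U" using insert z by auto
  show ?case
  proof (cases "(x, z) \<in> r")
    case True
    have "\<forall>w\<in>insert x F. (x, w) \<in> r"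
      using True z(2) tr refl xU unfolding trans_def refl_on_def by blast
    then show ?thesis by blast
  next
    case False
    then have "x \<noteq> z" using refl xU unfolding refl_on_def by blast
    then have "(z, x) \<in> r" using tot False xU zU unfolding total_on_def by blast
    then have "\<forall>w\<in>insert x F. (z, w) \<in> r" using z(2) by blast
    then show ?thesis using z(1) by blast
  qed
qed

lemma min_split:
  assumes lin: "linear_order_on U r" and fin: "finite (A \<union> B)" and ne: "A \<noteq> {}" and AU: "A \<subseteq> U" and BU: "B \<subseteq> U"
    and AB: "A \<inter> B = {}"
  shows "(\<exists>z\<in>A. \<forall>w\<in>A \<union> B. (z, w) \<in> r) \<noteq> (\<exists>z\<in>B. \<forall>w\<in>A \<union> B. (z, w) \<in> r)"
proof -
  have anti: "antisym r" using lin unfolding linear_order_on_def partial_order_on_def by blast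
  obtain z where z: "z \<in> A \<union> B" "\<forall>w\<in>A \<union> B. (z, w) \<in> r"
    using lin_min[OF lin fin] ne AU BU by blast
  show ?thesis
  proof
    assume eq: "(\<exists>z\<in>A. \<forall>w\<in>A \<union> B. (z, w) \<in> r) = (\<exists>z\<in>B. \<forall>w\<in>A \<union> B. (z, w) \<in> r)"
    have both: "(\<exists>z\<in>A. \<forall>w\<in>A \<union> B. (z, w) \<in> r) \<and> (\<exists>z\<in>B. \<forall>w\<in>A \<union> B. (z, w) \<in> r)"
      using z eq by blast
    then obtain z1 z2 where z1: "z1 \<in> A" "\<forall>w\<in>A \<union> B. (z1, w) \<in> r" and z2: "z2 \<in> B" "\<forall>w\<in>A \<union> B. (z2, w) \<in> r"
      by blast
    have "(z1, z2) \<in> r" "(z2, z1) \<in> r" using z1 z2 by blast+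
    then have "z1 = z2" using anti unfolding antisym_def by blast
    then show False using z1 z2 AB by blast
  qed
qed

definition psi :: "mso \<Rightarrow> nat \<Rightarrow> nat \<Rightarrow> mso" where
  "psi \<phi> X Y = Ex1 0 (Conj (Mem 0 X) (All1 1 (Disj (Neg (Disj (Mem 1 X) (Mem 1 Y))) \<phi>)))"

lemma psi_sat:
  assumes "X \<noteq> Y" "\<beta> X = A" "\<beta> Y = B" "A \<subseteq> U" "B \<subseteq> U"
  shows "sat U R \<alpha> \<beta> (psi \<phi> X Y) \<longleftrightarrow> (\<exists>z\<in>A. \<forall>w\<in>A \<union> B. sat U R (\<alpha>(0 := z, 1 := w)) \<beta> \<phi>)"
  using assms unfolding psi_def by auto

lemma finite_inc_univ: "graph V E \<Longrightarrow> finite (inc_univ V E)"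
proof -
  assume g: "graph V E"
  then have fV: "finite V" unfolding graph_def by blast
  have "E \<subseteq> Pow V"
  proof
    fix e assume "e \<in> E"
    then obtain u v where "u \<in> V" "v \<in> V" "e = {u, v}" using g unfolding graph_def by blast
    then show "e \<in> Pow V" by simp
  qed
  then have "finite E" using fV by (meson finite_Pow_iff finite_subset)
  then show ?thesis using fV unfolding inc_univ_def by simp
qed


lemma comp_bound:
  assumes g: "graph V E" and ord: "mso_orderable n m (inc_univ V E) (inc_rel V E)" and S: "S \<subseteq> V" and k: "card S \<le> k"
  shows "card (components_minus V E S) \<le> (Tb (m + 2) (n + m + 2) k (m + 2))\<^sup>2"
proof -
  define U where "U = inc_univ V E"
  define R where "R = inc_rel V E"
  obtain \<phi> Ps where \<phi>: "qr \<phi> \<le> m" "fv1 \<phi> \<subseteq> {0, 1}" "fv2 \<phi> \<subseteq> {..<n}" "length Ps = n"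
    and lin: "linear_order_on U (defined_rel U R \<phi> Ps)"
    using ord unfolding mso_orderable_def U_def R_def by blast
  define rel where "rel = defined_rel U R \<phi> Ps"
  define \<phi>' where "\<phi>' = ren n id id 0 \<phi>"
  have qr': "qr \<phi>' \<le> m" unfolding \<phi>'_def using \<phi>(1) ren_qr by simp
  have av1: "allv1 \<phi>' \<subseteq> {..<m + 2}"
  proof -
    have "allv1 \<phi>' \<subseteq> {..<2 + 0 + qr \<phi>}" unfolding \<phi>'_def by (rule ren_allv1) (use \<phi>(2) in auto)
    then show ?thesis using \<phi>(1) by auto
  qed
  have av2: "allv2 \<phi>' \<subseteq> {..<n + m}"
  proof -
    have "allv2 \<phi>' \<subseteq> {..<n + 0 + qr \<phi>}" unfolding \<phi>'_def by (rule ren_allv2) (use \<phi>(3) in auto)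
    then show ?thesis using \<phi>(1) by auto
  qed
  have fv': "fv1 \<phi>' \<subseteq> {0, 1}" using ren_fv1[of n id id 0 \<phi>] \<phi>(2) unfolding \<phi>'_def by auto
  define Xn where "Xn = n + m"
  define Yn where "Yn = Suc (n + m)"
  define \<psi> where "\<psi> = psi \<phi>' Xn Yn"
  have qr\<psi>: "qr \<psi> \<le> m + 2" unfolding \<psi>_def psi_def using qr' by simp
  have fv\<psi>: "fv1 \<psi> \<subseteq> {}" unfolding \<psi>_def psi_def using fv' by auto
  have av1\<psi>: "allv1 \<psi> \<subseteq> {..<m + 2}" unfolding \<psi>_def psi_def using av1 by auto
  have av2\<psi>: "allv2 \<psi> \<subseteq> {..<n + m + 2}" unfolding \<psi>_def psi_def Xn_def Yn_def using av2 by auto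
  define \<beta>0 where "\<beta>0 = (\<lambda>i. if i < length Ps then Ps ! i else {})"
  define bAB where "bAB = (\<lambda>A B. \<beta>0(Xn := A, Yn := B))"
  have XY: "Xn \<noteq> Yn" unfolding Xn_def Yn_def by simp
  have phi_rel: "sat U R (\<alpha>(0 := z, 1 := w)) (bAB A B) \<phi>' \<longleftrightarrow> (z, w) \<in> rel" if "z \<in> U" "w \<in> U" for \<alpha> z w A B
  proof -
    have "sat U R (\<alpha>(0 := z, 1 := w)) (bAB A B) \<phi>' = sat U R (\<lambda>i. if i = 0 then z else w) \<beta>0 \<phi>"
      unfolding \<phi>'_def
    proof (rule ren_sat)
      show "\<forall>x\<in>fv1 \<phi>. id x < 2 + 0 \<and> (\<alpha>(0 := z, 1 := w)) (id x) = (if x = 0 then z else w)"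
        using \<phi>(2) by auto
      show "\<forall>X\<in>fv2 \<phi>. id X < n + 0 \<and> bAB A B (id X) = \<beta>0 X"
        using \<phi>(3) unfolding bAB_def Xn_def Yn_def by auto
    qed
    then show ?thesis unfolding rel_def defined_rel_def \<beta>0_def using that by simp
  qed
  have sem: "sat U R \<alpha> (bAB A B) \<psi> \<longleftrightarrow> (\<exists>z\<in>A. \<forall>w\<in>A \<union> B. (z, w) \<in> rel)" if "A \<subseteq> U" "B \<subseteq> U" for \<alpha> A B
  proof -
    have "sat U R \<alpha> (bAB A B) \<psi> \<longleftrightarrow> (\<exists>z\<in>A. \<forall>w\<in>A \<union> B. sat U R (\<alpha>(0 := z, 1 := w)) (bAB A B) \<phi>')"
      unfolding \<psi>_def by (rule psi_sat) (use XY that in \<open>auto simp: bAB_def\<close>)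
    also have "\<dots> \<longleftrightarrow> (\<exists>z\<in>A. \<forall>w\<in>A \<union> B. (z, w) \<in> rel)"
      using phi_rel that by blast
    finally show ?thesis .
  qed
  have finS: "finite S" using S g unfolding graph_def by (meson finite_subset)
  define sl where "sl = map VElem (sorted_list_of_set S)"
  have setsl: "set sl = VElem ` S" unfolding sl_def using finS by simp
  have lensl: "length sl = card S" unfolding sl_def using finS by simp
  define N1 where "N1 = {..<m + 2}"
  define N2 where "N2 = {..<n + m + 2}"
  define comps where "comps = components_minus V E S"
  define \<alpha>0 where "\<alpha>0 = (\<lambda>_::nat. undefined :: inc_elem)"
  define \<tau> where "\<tau> C = (gm.cls R sl N1 N2 (m + 2) (blk E C, {}, \<alpha>0, bAB (blk E C) {}),
      gm.cls R sl N1 N2 (m + 2) (blk E C, {}, \<alpha>0, bAB {} (blk E C)))" for C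
  define Cl where "Cl = gm.cls R sl N1 N2 (m + 2) ` gm.Pos N1 (blk E ` comps)"
  have cc: "finite Cl \<and> card Cl \<le> Tb (card N1) (card N2) (length sl) (m + 2)"
    unfolding Cl_def by (rule gm.card_cls) (simp_all add: N1_def N2_def)
  have T: "Tb (card N1) (card N2) (length sl) (m + 2) \<le> Tb (m + 2) (n + m + 2) k (m + 2)"
  proof -
    have "card N1 = m + 2" "card N2 = n + m + 2" unfolding N1_def N2_def by simp_all
    then show ?thesis unfolding lensl by (simp only:) (rule Tb_mono_K[OF k])
  qed
  have sub: "\<tau> ` comps \<subseteq> Cl \<times> Cl"
  proof
    fix z assume "z \<in> \<tau> ` comps"
    then obtain C where C: "C \<in> comps" "z = \<tau> C" by blast
    have "(blk E C, {}, \<alpha>0, bAB (blk E C) {}) \<in> gm.Pos N1 (blk E ` comps)"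
      "(blk E C, {}, \<alpha>0, bAB {} (blk E C)) \<in> gm.Pos N1 (blk E ` comps)"
      unfolding gm.Pos_def using C(1) by auto
    then show "z \<in> Cl \<times> Cl" unfolding C(2) \<tau>_def Cl_def by blast
  qed
  have finU: "finite U" unfolding U_def using finite_inc_univ[OF g] .
  have inj: "inj_on \<tau> comps"
  proof (rule inj_onI, rule ccontr)
    fix C1 C2 assume C1: "C1 \<in> comps" and C2: "C2 \<in> comps" and eq: "\<tau> C1 = \<tau> C2" and ne: "C1 \<noteq> C2"
    define A where "A = blk E C1"
    define B where "B = blk E C2"
    have sw: "swp R sl U A B" unfolding A_def B_def R_def U_def
      by (rule blk_swp[OF g C1[unfolded comps_def] C2[unfolded comps_def] ne setsl])
    interpret sw: swp R sl N1 N2 U A B by (rule sw)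
    have AU: "A \<subseteq> U" and BU: "B \<subseteq> U" and AB: "A \<inter> B = {}" using sw.AU sw.BU sw.AB .
    have E1: "sw.eqv (m + 2) (A, {}, \<alpha>0, bAB A {}) (B, {}, \<alpha>0, bAB B {})"
      using eq gm.cls_eq_iff unfolding \<tau>_def A_def B_def by blast
    have E2: "sw.eqv (m + 2) (A, {}, \<alpha>0, bAB {} A) (B, {}, \<alpha>0, bAB {} B)"
      using eq gm.cls_eq_iff unfolding \<tau>_def A_def B_def by blast
    have inS0: "sw.inS C \<alpha>0 {} = {}" for C unfolding sw.inS_def by simp
    have e1: "sw.eqv (m + 2) (A, sw.inS A \<alpha>0 {}, \<alpha>0, bAB A B) (B, sw.inS B \<alpha>0 {}, \<alpha>0, bAB B A)"
    proof -
      have "sw.eqv (m + 2) (A, {}, \<alpha>0, bAB A B) (B, {}, \<alpha>0, bAB B {})"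
        by (rule sw.eqv_agree[OF E1]) (use AB in \<open>auto simp: bAB_def\<close>)
      then have "sw.eqv (m + 2) (A, {}, \<alpha>0, bAB A B) (B, {}, \<alpha>0, bAB B A)"
        by (rule sw.eqv_agree2) (use AB in \<open>auto simp: bAB_def\<close>)
      then show ?thesis using inS0 by simp
    qed
    have e2: "sw.eqv (m + 2) (B, sw.inS B \<alpha>0 {}, \<alpha>0, bAB A B) (A, sw.inS A \<alpha>0 {}, \<alpha>0, bAB B A)"
    proof -
      have E2': "sw.eqv (m + 2) (B, {}, \<alpha>0, bAB {} B) (A, {}, \<alpha>0, bAB {} A)" using sw.eqv_sym[OF E2] .
      have "sw.eqv (m + 2) (B, {}, \<alpha>0, bAB A B) (A, {}, \<alpha>0, bAB {} A)"
        by (rule sw.eqv_agree[OF E2']) (use AB in \<open>auto simp: bAB_def\<close>)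
      then have "sw.eqv (m + 2) (B, {}, \<alpha>0, bAB A B) (A, {}, \<alpha>0, bAB B A)"
        by (rule sw.eqv_agree2) (use AB in \<open>auto simp: bAB_def\<close>)
      then show ?thesis using inS0 by simp
    qed
    have bb: "\<forall>X. bAB A B X - A - B = bAB B A X - A - B" unfolding bAB_def by auto
    have C: "sw.Corr (m + 2) {} \<alpha>0 (bAB A B) \<alpha>0 (bAB B A)"
      by (rule sw.CorrI[OF _ bb e1 e2]) simp
    have "sat U R \<alpha>0 (bAB A B) \<psi> = sat U R \<alpha>0 (bAB B A) \<psi>"
      by (rule sw.swap[OF C qr\<psi> fv\<psi>]) (use av1\<psi> av2\<psi> in \<open>simp_all add: N1_def N2_def\<close>)
    then have "(\<exists>z\<in>A. \<forall>w\<in>A \<union> B. (z, w) \<in> rel) = (\<exists>z\<in>B. \<forall>w\<in>B \<union> A. (z, w) \<in> rel)"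
      using sem[OF AU BU] sem[OF BU AU] by simp
    moreover have "finite (A \<union> B)" using AU BU finU by (meson finite_subset le_sup_iff)
    moreover have "A \<noteq> {}" unfolding A_def using blk_ne C1 comps_def by blast
    ultimately show False using min_split[OF lin[folded rel_def] _ _ AU BU AB] by (simp add: Un_commute)
  qed
  have "card comps = card (\<tau> ` comps)" using card_image[OF inj] by simp
  also have "\<dots> \<le> card (Cl \<times> Cl)" using card_mono[OF _ sub] cc by simp
  also have "\<dots> = card Cl * card Cl" by (simp add: card_cartesian_product)
  also have "\<dots> \<le> Tb (m + 2) (n + m + 2) k (m + 2) * Tb (m + 2) (n + m + 2) k (m + 2)"
    using cc T by (intro mult_le_mono) auto
  finally show ?thesis unfolding comps_def by (simp add: power2_eq_square)
qed

theorem proposition4p3: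
  shows "\<exists>f :: nat \<Rightarrow> nat \<Rightarrow> nat \<Rightarrow> nat.
     (\<forall>n m k V E. graph V E \<and> mso_orderable n m (inc_univ V E) (inc_rel V E)
        \<longrightarrow> Sep V E k \<le> f n m k) \<and>
     (\<exists>g. computable2 g \<and> (\<forall>n m k. f n m k \<le> exp_tower (g n m) k))"
proof (intro exI[of _ "\<lambda>n m k. (Tb (m + 2) (n + m + 2) k (m + 2))\<^sup>2"] conjI allI impI)
  fix n m k V E
  assume H: "graph V E \<and> mso_orderable n m (inc_univ V E) (inc_rel V E)"
  have fV: "finite V" using H unfolding graph_def by blast
  let ?M = "{card (components_minus V E S) | S. S \<subseteq> V \<and> card S \<le> k}"
  have fin: "finite ?M"
  proof -
    have "?M = (\<lambda>S. card (components_minus V E S)) ` {S. S \<subseteq> V \<and> card S \<le> k}" by blast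
    moreover have "finite {S. S \<subseteq> V \<and> card S \<le> k}" using fV by simp
    ultimately show ?thesis by simp
  qed
  have ne: "?M \<noteq> {}" by auto
  show "Sep V E k \<le> (Tb (m + 2) (n + m + 2) k (m + 2))\<^sup>2"
    unfolding Sep_def
  proof (rule Max.boundedI[OF fin ne])
    fix x assume "x \<in> ?M"
    then obtain S where "x = card (components_minus V E S)" "S \<subseteq> V" "card S \<le> k" by blast
    then show "x \<le> (Tb (m + 2) (n + m + 2) k (m + 2))\<^sup>2" using comp_bound H by blast
  qed
next
  show "\<exists>g. computable2 g \<and> (\<forall>n m k. (Tb (m + 2) (n + m + 2) k (m + 2))\<^sup>2 \<le> exp_tower (g n m) k)"
    using computable_gfun f_bound by blast
qed


end
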